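(* In the setting described in the context, \[ u(r,t)\ge\Big(\inf_{r\in(0,R)}u_0(r)\Big)\,e^{-\kappa t}\qquad\text{for all }r\in(0,R)\text{ and }t\in(0,T_{max}), \] where $\kappa:=\chi\mu+\frac{2(n-1)\chi\mu}{3\sqrt3\,n}$.
   Context: Let $n\ge1$, $R>0$, $\Omega=B_R(0)\subset\mathbb{R}^n$, $\chi>0$, and let $u_0\in C^3(\bar\Omega)$ be radially symmetric and positive in $\bar\Omega$ with $\partial u_0/\partial\nu=0$ on $\partial\Omega$; let $\mu:=\frac{1}{|\Omega|}\int_\Omega u_0$. Let $T_{max}\in(0,\infty]$ and $(u,v)$ denote the maximally extended classical solution of the problem $u_t=\nabla\cdot\big(\frac{u\nabla u}{\sqrt{u^2+|\nabla u|^2}}\big)-\chi\nabla\cdot\big(\frac{u\nabla v}{\sqrt{1+|\nabla v|^2}}\big)$, $0=\Delta v-\mu+u$ in $\Omega\times(0,T_{max})$, $\big(\frac{u\nabla u}{\sqrt{u^2+|\nabla u|^2}}-\chi\frac{u\nabla v}{\sqrt{1+|\nabla v|^2}}\big)\cdot\nu=0$ on $\partial\Omega$, $u(\cdot,0)=u_0$; that is, $u\in C^{2,1}(\bar\Omega\times[0,T_{max}))$ and $v\in C^{2,0}(\bar\Omega\times[0,T_{max}))$ are the uniquely determined positive radially symmetric functions solving this problem classically, and $T_{max}$ is the maximal time of existence of this classical solution. By radial symmetry we write $u(r,t)$, $v(r,t)$ with $r=|x|\in(0,R)$. *)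

theory Defs
  imports "HOL-Analysis.Analysis"
begin

text \<open>Spatial domain: Omega = ball 0 R in real^'n (n = CARD('n) >= 1), closure = cball 0 R.
  Derivatives up to the boundary are taken within the closed ball.\<close>

definition C3_cball :: "real \<Rightarrow> (real^'n \<Rightarrow> real) \<Rightarrow> bool" where
  "C3_cball R f \<longleftrightarrow> (\<exists>g H T3.
     continuous_on (cball 0 R) f \<and> continuous_on (cball 0 R) g \<and>
     continuous_on (cball 0 R) H \<and> continuous_on (cball 0 R) T3 \<and>
     (\<forall>x\<in>cball 0 R. (f has_derivative (\<lambda>h. g x \<bullet> h)) (at x within cball 0 R)) \<and>
     (\<forall>x\<in>cball 0 R. (g has_derivative (\<lambda>h. H x *v h)) (at x within cball 0 R)) \<and>
     (\<forall>x\<in>cball 0 R. \<forall>i j. ((\<lambda>y. H y $ i $ j) has_derivative (\<lambda>h. T3 x $ i $ j \<bullet> h))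
                               (at x within cball 0 R)))"

definition neumann_zero :: "real \<Rightarrow> (real^'n \<Rightarrow> real) \<Rightarrow> bool" where
  "neumann_zero R f \<longleftrightarrow> (\<forall>x. norm x = R \<longrightarrow>
     (\<exists>Df. (f has_derivative Df) (at x within cball 0 R) \<and> Df ((1/R) *\<^sub>R x) = 0))"

definition radial :: "(real^'n \<Rightarrow> 'a) \<Rightarrow> bool" where
  "radial f \<longleftrightarrow> (\<forall>x y. norm x = norm y \<longrightarrow> f x = f y)"

definition mean_ball :: "real \<Rightarrow> (real^'n \<Rightarrow> real) \<Rightarrow> real" where
  "mean_ball R f = integral (ball 0 R) f / measure lebesgue (ball (0::real^'n) R)"

definition has_divergence :: "(real^'n \<Rightarrow> real^'n) \<Rightarrow> real \<Rightarrow> real^'n \<Rightarrow> bool" where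
  "has_divergence G d x \<longleftrightarrow>
     (\<exists>DG. (G has_derivative DG) (at x) \<and> d = (\<Sum>i\<in>UNIV. DG (axis i 1) $ i))"

definition flux :: "real \<Rightarrow> real \<Rightarrow> real^'n \<Rightarrow> real^'n \<Rightarrow> real^'n" where
  "flux chi u gu gv =
     (u / sqrt (u\<^sup>2 + (norm gu)\<^sup>2)) *\<^sub>R gu - (chi * u / sqrt (1 + (norm gv)\<^sup>2)) *\<^sub>R gv"

definition classical_sol ::
  "real \<Rightarrow> real \<Rightarrow> ereal \<Rightarrow> (real^'n \<Rightarrow> real) \<Rightarrow>
   (real^'n \<Rightarrow> real \<Rightarrow> real) \<Rightarrow> (real^'n \<Rightarrow> real \<Rightarrow> real) \<Rightarrow> bool" where
  "classical_sol R chi T u0 u v \<longleftrightarrow>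
    (let S = {(x,t). x \<in> cball 0 R \<and> 0 \<le> t \<and> ereal t < T};
         I = {t. 0 \<le> t \<and> ereal t < T};
         \<mu> = mean_ball R u0 in
    (\<exists>(gu :: real^'n \<Rightarrow> real \<Rightarrow> real^'n) (Hu :: real^'n \<Rightarrow> real \<Rightarrow> real^'n^'n) ut
       (gv :: real^'n \<Rightarrow> real \<Rightarrow> real^'n) (Hv :: real^'n \<Rightarrow> real \<Rightarrow> real^'n^'n).
      continuous_on S (\<lambda>(x,t). u x t) \<and> continuous_on S (\<lambda>(x,t). gu x t) \<and>
      continuous_on S (\<lambda>(x,t). Hu x t) \<and> continuous_on S (\<lambda>(x,t). ut x t) \<and>
      continuous_on S (\<lambda>(x,t). v x t) \<and> continuous_on S (\<lambda>(x,t). gv x t) \<and>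
      continuous_on S (\<lambda>(x,t). Hv x t) \<and>
      (\<forall>(x,t)\<in>S. ((\<lambda>y. u y t) has_derivative (\<lambda>h. gu x t \<bullet> h)) (at x within cball 0 R)) \<and>
      (\<forall>(x,t)\<in>S. ((\<lambda>y. gu y t) has_derivative (\<lambda>h. Hu x t *v h)) (at x within cball 0 R)) \<and>
      (\<forall>(x,t)\<in>S. ((\<lambda>s. u x s) has_real_derivative ut x t) (at t within I)) \<and>
      (\<forall>(x,t)\<in>S. ((\<lambda>y. v y t) has_derivative (\<lambda>h. gv x t \<bullet> h)) (at x within cball 0 R)) \<and>
      (\<forall>(x,t)\<in>S. ((\<lambda>y. gv y t) has_derivative (\<lambda>h. Hv x t *v h)) (at x within cball 0 R)) \<and>
      (\<forall>(x,t)\<in>S. u x t > 0 \<and> v x t > 0) \<and>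
      (\<forall>t\<in>I. radial (\<lambda>x. u x t) \<and> radial (\<lambda>x. v x t)) \<and>
      (\<forall>x\<in>ball 0 R. \<forall>t. 0 < t \<and> ereal t < T \<longrightarrow>
         has_divergence (\<lambda>y. flux chi (u y t) (gu y t) (gv y t)) (ut x t) x) \<and>
      (\<forall>x\<in>ball 0 R. \<forall>t. 0 < t \<and> ereal t < T \<longrightarrow>
         0 = (\<Sum>i\<in>UNIV. Hv x t $ i $ i) - \<mu> + u x t) \<and>
      (\<forall>x. norm x = R \<longrightarrow> (\<forall>t. 0 < t \<and> ereal t < T \<longrightarrow>
         flux chi (u x t) (gu x t) (gv x t) \<bullet> ((1/R) *\<^sub>R x) = 0)) \<and>
      (\<forall>x\<in>cball 0 R. u x 0 = u0 x)))"

definition maximal_sol ::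
  "real \<Rightarrow> real \<Rightarrow> ereal \<Rightarrow> (real^'n \<Rightarrow> real) \<Rightarrow>
   (real^'n \<Rightarrow> real \<Rightarrow> real) \<Rightarrow> (real^'n \<Rightarrow> real \<Rightarrow> real) \<Rightarrow> bool" where
  "maximal_sol R chi Tmax u0 u v \<longleftrightarrow> 0 < Tmax \<and> classical_sol R chi Tmax u0 u v \<and>
    (\<forall>T' u' v'. Tmax < T' \<longrightarrow> classical_sol R chi T' u0 u' v' \<longrightarrow>
       \<not> (\<forall>x\<in>cball 0 R. \<forall>t. 0 \<le> t \<and> ereal t < Tmax \<longrightarrow> u' x t = u x t))"

end

theory Submission
  imports Defs
begin

lemma fun_cong_0: "f = g \<Longrightarrow> f x = g x" by simp


lemma sd_left:
  fixes h h1 :: "real \<Rightarrow> real"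
  assumes as0: "a < s0"
    and dh: "\<And>s. s \<in> {a..s0} \<Longrightarrow> (h has_real_derivative h1 s) (at s within {a..s0})"
    and dh1: "(h1 has_real_derivative c) (at s0 within {a..s0})"
    and h10: "h1 s0 = 0"
    and mn: "\<And>s. s \<in> {a..s0} \<Longrightarrow> h s0 \<le> h s"
  shows "c \<ge> 0"
proof (rule ccontr)
  assume "\<not> c \<ge> 0" hence c: "c < 0" by simp
  have "((\<lambda>s. (h1 s - h1 s0) / (s - s0)) \<longlongrightarrow> c) (at s0 within {a..s0})"
    using dh1 by (simp add: has_field_derivative_iff)
  hence "eventually (\<lambda>s. (h1 s - h1 s0) / (s - s0) < c/2) (at s0 within {a..s0})"
    using c by (intro order_tendstoD) auto
  then obtain d where d: "d > 0" and dd: "\<And>s. s \<in> {a..s0} \<Longrightarrow> s \<noteq> s0 \<Longrightarrow> dist s s0 < d \<Longrightarrow> h1 s / (s - s0) < c/2"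
    unfolding eventually_at h10 by auto
  define s1 where "s1 = max a (s0 - d/2)"
  have s1: "a \<le> s1" "s1 < s0" "s0 - s1 < d" using as0 d by (auto simp: s1_def)
  have pos: "h1 s > 0" if "s1 < s" "s < s0" for s
  proof -
    have "h1 s / (s - s0) < c/2" using dd[of s] that s1 by (auto simp: dist_real_def)
    hence "h1 s / (s - s0) < 0" using c by linarith
    thus ?thesis using that by (simp add: divide_less_0_iff)
  qed
  have "\<exists>x\<in>{s1<..<s0}. h s0 - h s1 = (\<lambda>y. h1 x * y) (s0 - s1)"
  proof (rule mvt_simple[OF s1(2)])
    fix x assume "s1 \<le> x" "x \<le> s0"
    hence "(h has_real_derivative h1 x) (at x within {s1..s0})"
      using dh[of x] s1 by (auto intro: DERIV_subset)
    thus "(h has_derivative (\<lambda>y. h1 x * y)) (at x within {s1..s0})"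
      by (simp add: has_field_derivative_def)
  qed
  then obtain x where x: "s1 < x" "x < s0" "h s0 - h s1 = h1 x * (s0 - s1)" by auto
  have "h1 x * (s0 - s1) > 0" using pos[OF x(1,2)] s1 by simp
  moreover have "h s0 \<le> h s1" using mn[of s1] s1 by auto
  ultimately show False using x(3) by simp
qed

lemma lim_end:
  fixes f g :: "real \<Rightarrow> real"
  assumes "a < b" "continuous_on {a..b} f" "continuous_on {a..b} g"
    and "\<And>s. a < s \<Longrightarrow> s < b \<Longrightarrow> f s = g s"
  shows "f b = g b"
proof -
  have f: "(f \<longlongrightarrow> f b) (at_left b)" and g: "(g \<longlongrightarrow> g b) (at_left b)"
    using assms continuous_on_Icc_at_leftD by blast+
  have "eventually (\<lambda>s. f s = g s) (at_left b)"
    using assms by (intro eventually_at_leftI[of a]) auto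
  hence "(g \<longlongrightarrow> f b) (at_left b)" using Lim_transform_eventually[OF f] by blast
  thus ?thesis using g tendsto_unique trivial_limit_at_left_real by blast
qed

lemma grad_orth:
  fixes f :: "real^'n \<Rightarrow> real"
  assumes rad: "radial f" and y: "y \<in> cball 0 R" "y \<noteq> 0"
    and df: "(f has_derivative (\<lambda>h. g \<bullet> h)) (at y within cball 0 R)"
    and wy: "w \<bullet> y = 0"
  shows "g \<bullet> w = 0"
proof (cases "w = 0")
  case True thus ?thesis by simp
next
  case False
  define k where "k = norm y / norm w"
  have kpos: "k > 0" using False y by (simp add: k_def)
  have kw: "k\<^sup>2 * (w \<bullet> w) = y \<bullet> y"
    using False by (simp add: k_def power2_norm_eq_inner[symmetric] power_divide)
  define c where "c = (\<lambda>\<theta>::real. cos \<theta> *\<^sub>R y + (sin \<theta> * k) *\<^sub>R w)"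
  have nc: "norm (c \<theta>) = norm y" for \<theta>
  proof -
    have yw: "y \<bullet> w = 0" using wy by (simp add: inner_commute)
    have "c \<theta> \<bullet> c \<theta> = (cos \<theta>)\<^sup>2 * (y \<bullet> y) + (sin \<theta> * k)\<^sup>2 * (w \<bullet> w) + 2 * (cos \<theta> * (sin \<theta> * k)) * (y \<bullet> w)"
      unfolding c_def by (simp add: inner_add_left inner_add_right inner_commute power2_eq_square algebra_simps)
    also have "\<dots> = (cos \<theta>)\<^sup>2 * (y \<bullet> y) + (sin \<theta>)\<^sup>2 * (k\<^sup>2 * (w \<bullet> w))"
      using yw by (simp add: power_mult_distrib)
    also have "\<dots> = ((cos \<theta>)\<^sup>2 + (sin \<theta>)\<^sup>2) * (y \<bullet> y)" by (simp only: kw distrib_right)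
    also have "\<dots> = y \<bullet> y" by simp
    finally have "(norm (c \<theta>))\<^sup>2 = (norm y)\<^sup>2" by (simp add: power2_norm_eq_inner)
    thus ?thesis by (simp add: power2_eq_iff_nonneg)
  qed
  have fc: "f (c \<theta>) = f y" for \<theta> using rad nc unfolding radial_def by blast
  have dc: "(c has_derivative (\<lambda>\<theta>. \<theta> *\<^sub>R (k *\<^sub>R w))) (at 0)"
  proof -
    have c1: "(cos has_derivative (\<lambda>h. (- sin 0) * h)) (at (0::real))"
      using DERIV_cos[of 0] unfolding has_field_derivative_def .
    have c2: "(sin has_derivative (\<lambda>h. cos 0 * h)) (at (0::real))"
      using DERIV_sin[of 0] unfolding has_field_derivative_def .
    have "(c has_derivative (\<lambda>h. ((- sin 0) * h) *\<^sub>R y + (cos 0 * h * k) *\<^sub>R w)) (at 0)"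
      unfolding c_def
      by (intro has_derivative_add has_derivative_scaleR_left has_derivative_mult_left c1 c2)
    thus ?thesis by (simp add: fun_eq_iff)
  qed
  have sub: "c ` UNIV \<subseteq> cball 0 R" using nc y by auto
  have c0: "c 0 = y" by (simp add: c_def)
  have "((f \<circ> c) has_derivative ((\<lambda>h. g \<bullet> h) \<circ> (\<lambda>\<theta>. \<theta> *\<^sub>R (k *\<^sub>R w)))) (at 0)"
    using diff_chain_within[OF dc has_derivative_subset[OF df[folded c0] sub]] .
  moreover have "f \<circ> c = (\<lambda>_. f y)" using fc by (simp add: fun_eq_iff)
  ultimately have "((\<lambda>_. f y) has_derivative ((\<lambda>h. g \<bullet> h) \<circ> (\<lambda>\<theta>. \<theta> *\<^sub>R (k *\<^sub>R w)))) (at 0)"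
    by simp
  hence "((\<lambda>h. g \<bullet> h) \<circ> (\<lambda>\<theta>. \<theta> *\<^sub>R (k *\<^sub>R w))) = (\<lambda>_. 0)"
    by (rule has_derivative_unique[OF _ has_derivative_const])
  hence "((\<lambda>h. g \<bullet> h) \<circ> (\<lambda>\<theta>. \<theta> *\<^sub>R (k *\<^sub>R w))) 1 = 0" by (rule fun_cong_0)
  hence "k * (g \<bullet> w) = 0" by simp
  thus ?thesis using kpos by simp
qed

lemma grad_par:
  fixes f :: "real^'n \<Rightarrow> real"
  assumes rad: "radial f" and y: "y \<in> cball 0 R" "y \<noteq> 0"
    and df: "(f has_derivative (\<lambda>h. g \<bullet> h)) (at y within cball 0 R)"
  shows "g = ((g \<bullet> y) / (y \<bullet> y)) *\<^sub>R y"
proof -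
  define w where "w = g - ((g \<bullet> y) / (y \<bullet> y)) *\<^sub>R y"
  have yy: "y \<bullet> y \<noteq> 0" using y by simp
  have "w \<bullet> y = 0" using yy by (simp add: w_def inner_diff_left)
  hence gw: "g \<bullet> w = 0" using grad_orth[OF rad y df] by blast
  have "w \<bullet> w = g \<bullet> w - ((g \<bullet> y) / (y \<bullet> y)) * (y \<bullet> w)"
    by (simp add: w_def inner_diff_left)
  also have "y \<bullet> w = 0" using \<open>w \<bullet> y = 0\<close> by (simp add: inner_commute)
  finally have "w = 0" using gw by simp
  thus ?thesis by (simp add: w_def)
qed

lemma grad0:
  fixes f :: "real^'n \<Rightarrow> real"
  assumes rad: "radial f" and R: "R > 0"
    and df: "(f has_derivative (\<lambda>h. g \<bullet> h)) (at 0 within cball 0 R)"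
  shows "g = 0"
proof -
  have ai: "at (0::real^'n) within cball 0 R = at 0"
    using R by (intro at_within_interior) simp
  have df': "(f has_derivative (\<lambda>h. g \<bullet> h)) (at 0)"
    using df unfolding ai .
  have df'': "(f has_derivative (\<lambda>h. g \<bullet> h)) (at (- 0))"
    using df' by simp
  have m: "((\<lambda>y::real^'n. - y) has_derivative (\<lambda>h. - h)) (at 0)"
    by (rule has_derivative_minus[OF has_derivative_ident])
  have "((\<lambda>y. f (- y)) has_derivative (\<lambda>h. g \<bullet> (- h))) (at 0)"
    using has_derivative_compose[OF m df''] .
  moreover have "(\<lambda>y. f (- y)) = f" using rad unfolding radial_def by (intro ext) (metis norm_minus_cancel)
  ultimately have "((\<lambda>y. f y) has_derivative (\<lambda>h. g \<bullet> (- h))) (at 0)" by simp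
  hence "(\<lambda>h. g \<bullet> (- h)) = (\<lambda>h. g \<bullet> h)" using df' by (rule has_derivative_unique)
  hence "g \<bullet> (- g) = g \<bullet> g" by (rule fun_cong)
  thus ?thesis by simp
qed

lemma trace_radial:
  fixes F :: "real^'n \<Rightarrow> real^'n" and \<phi> :: "real \<Rightarrow> real"
  assumes x: "x \<noteq> 0" and U: "open U" "x \<in> U"
    and FU: "\<And>y. y \<in> U \<Longrightarrow> F y = (\<phi> (norm y) / norm y) *\<^sub>R y"
    and dphi: "(\<phi> has_real_derivative \<phi>') (at (norm x))"
    and dF: "(F has_derivative DF) (at x)"
  shows "(\<Sum>i\<in>UNIV. DF (axis i 1) $ i) = \<phi>' + (real CARD('n) - 1) * \<phi> (norm x) / norm x"
proof -
  define r where "r = norm x"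
  have r: "r > 0" using x by (simp add: r_def)
  define DK where "DK = (\<lambda>h. ((\<phi>' - \<phi> r / r) / r\<^sup>2 * (x \<bullet> h)) *\<^sub>R x + (\<phi> r / r) *\<^sub>R h)"
  have N: "(norm has_derivative (\<lambda>h. h \<bullet> sgn x)) (at x)" using has_derivative_norm[OF x] .
  have P: "((\<lambda>y. \<phi> (norm y)) has_derivative (\<lambda>h. \<phi>' * (h \<bullet> sgn x))) (at x)"
    using has_derivative_compose[OF N dphi[unfolded has_field_derivative_def]] .
  have Q: "((\<lambda>y. \<phi> (norm y) / norm y) has_derivative
      (\<lambda>h. (\<phi>' * (h \<bullet> sgn x) * norm x - \<phi> (norm x) * (h \<bullet> sgn x)) / (norm x * norm x))) (at x)"
    using has_derivative_divide'[OF P N] x by (simp add: inverse_eq_divide)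
  have K: "((\<lambda>y. (\<phi> (norm y) / norm y) *\<^sub>R y) has_derivative
      (\<lambda>h. (\<phi> (norm x) / norm x) *\<^sub>R h +
         ((\<phi>' * (h \<bullet> sgn x) * norm x - \<phi> (norm x) * (h \<bullet> sgn x)) / (norm x * norm x)) *\<^sub>R x)) (at x)"
    using has_derivative_scaleR[OF Q has_derivative_ident] by simp
  have K': "((\<lambda>y. (\<phi> (norm y) / norm y) *\<^sub>R y) has_derivative DK) (at x)"
  proof (rule has_derivative_eq_rhs[OF K], rule ext)
    fix h
    have "h \<bullet> sgn x = (x \<bullet> h) / r" by (simp add: sgn_div_norm r_def inner_commute divide_inverse mult.commute)
    thus "(\<phi> (norm x) / norm x) *\<^sub>R h +
         ((\<phi>' * (h \<bullet> sgn x) * norm x - \<phi> (norm x) * (h \<bullet> sgn x)) / (norm x * norm x)) *\<^sub>R x = DK h"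
      using r unfolding DK_def r_def[symmetric]
      by (simp add: field_simps power2_eq_square)
  qed
  have "(F has_derivative DK) (at x)"
    by (rule has_derivative_transform_within_open[OF K' U]) (simp add: FU)
  hence DF: "DF = DK" by (rule has_derivative_unique[OF dF])
  have xx: "(\<Sum>i\<in>UNIV. x $ i * x $ i) = r\<^sup>2"
    by (simp add: r_def power2_norm_eq_inner inner_vec_def)
  have "(\<Sum>i\<in>UNIV. DK (axis i 1) $ i) = (\<Sum>i\<in>UNIV. (\<phi>' - \<phi> r / r) / r\<^sup>2 * (x $ i * x $ i) + \<phi> r / r)"
    unfolding DK_def by (intro sum.cong refl) (simp add: inner_axis)
  also have "\<dots> = (\<phi>' - \<phi> r / r) / r\<^sup>2 * (\<Sum>i\<in>UNIV. x $ i * x $ i) + (\<Sum>i\<in>(UNIV::'n set). \<phi> r / r)"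
    by (simp only: sum.distrib sum_distrib_left)
  also have "\<dots> = (\<phi>' - \<phi> r / r) / r\<^sup>2 * r\<^sup>2 + real CARD('n) * (\<phi> r / r)"
    by (simp only: xx sum_constant)
  also have "\<dots> = \<phi>' + (real CARD('n) - 1) * \<phi> r / r"
  proof -
    define q where "q = \<phi> r / r"
    have "(\<phi>' - q) / r\<^sup>2 * r\<^sup>2 = \<phi>' - q" using r by simp
    hence "(\<phi>' - q) / r\<^sup>2 * r\<^sup>2 + real CARD('n) * q = \<phi>' + (real CARD('n) - 1) * q"
      by (simp add: algebra_simps)
    thus ?thesis by (simp add: q_def)
  qed
  finally have "(\<Sum>i\<in>UNIV. DK (axis i 1) $ i) = \<phi>' + (real CARD('n) - 1) * \<phi> r / r" .
  thus ?thesis unfolding DF r_def .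
qed

lemma deriv_unique_Icc:
  fixes f :: "real \<Rightarrow> real"
  assumes "a < b" "x \<in> {a..b}"
    and "(f has_real_derivative D1) (at x within {a..b})"
    and "(f has_real_derivative D2) (at x within {a..b})"
  shows "D1 = D2"
proof -
  have "(*) D1 = (*) D2"
    using assms by (intro frechet_derivative_unique_within_closed_interval[of a b x f])
      (auto simp: has_field_derivative_def cbox_interval)
  thus ?thesis by (metis mult.right_neutral)
qed

lemma line_deriv:
  fixes f :: "real^'n \<Rightarrow> real"
  assumes df: "(f has_derivative (\<lambda>h. g \<bullet> h)) (at (s *\<^sub>R e) within cball 0 R)"
    and X: "\<And>s'. s' \<in> X \<Longrightarrow> s' *\<^sub>R e \<in> cball 0 R"
  shows "((\<lambda>s. f (s *\<^sub>R e)) has_real_derivative (g \<bullet> e)) (at s within X)"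
proof -
  have l: "((\<lambda>s::real. s *\<^sub>R e) has_derivative (\<lambda>h. h *\<^sub>R e)) (at s within X)"
    by (intro has_derivative_scaleR_left has_derivative_ident)
  have sub: "(\<lambda>s. s *\<^sub>R e) ` X \<subseteq> cball 0 R" using X by auto
  have "((f \<circ> (\<lambda>s. s *\<^sub>R e)) has_derivative ((\<lambda>h. g \<bullet> h) \<circ> (\<lambda>h. h *\<^sub>R e))) (at s within X)"
    using diff_chain_within[OF l has_derivative_subset[OF df sub]] .
  moreover have "((\<lambda>h. g \<bullet> h) \<circ> (\<lambda>h. h *\<^sub>R e)) = (*) (g \<bullet> e)"
    by (simp add: fun_eq_iff mult.commute)
  ultimately show ?thesis by (simp add: has_field_derivative_def o_def)
qed

lemma line_deriv_vec:
  fixes F :: "real^'n \<Rightarrow> real^'n"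
  assumes dF: "(F has_derivative (\<lambda>h. H *v h)) (at (s *\<^sub>R e) within cball 0 R)"
    and X: "\<And>s'. s' \<in> X \<Longrightarrow> s' *\<^sub>R e \<in> cball 0 R"
  shows "((\<lambda>s. F (s *\<^sub>R e) \<bullet> e) has_real_derivative ((H *v e) \<bullet> e)) (at s within X)"
proof -
  have l: "((\<lambda>s::real. s *\<^sub>R e) has_derivative (\<lambda>h. h *\<^sub>R e)) (at s within X)"
    by (intro has_derivative_scaleR_left has_derivative_ident)
  have sub: "(\<lambda>s. s *\<^sub>R e) ` X \<subseteq> cball 0 R" using X by auto
  have "((F \<circ> (\<lambda>s. s *\<^sub>R e)) has_derivative ((\<lambda>h. H *v h) \<circ> (\<lambda>h. h *\<^sub>R e))) (at s within X)"
    using diff_chain_within[OF l has_derivative_subset[OF dF sub]] .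
  hence "((\<lambda>s. (F \<circ> (\<lambda>s. s *\<^sub>R e)) s \<bullet> e) has_derivative (\<lambda>h. ((\<lambda>h. H *v h) \<circ> (\<lambda>h. h *\<^sub>R e)) h \<bullet> e)) (at s within X)"
    by (rule bounded_linear.has_derivative[OF bounded_linear_inner_left])
  moreover have "(\<lambda>h. ((\<lambda>h. H *v h) \<circ> (\<lambda>h. h *\<^sub>R e)) h \<bullet> e) = (*) ((H *v e) \<bullet> e)"
    by (simp add: fun_eq_iff mult.commute matrix_vector_mult_scaleR)
  ultimately show ?thesis by (simp add: has_field_derivative_def o_def)
qed

lemma profile_indep:
  fixes f :: "real^'n \<Rightarrow> real" and G :: "real^'n \<Rightarrow> real^'n"
  assumes rad: "radial f" and R: "R > 0"
    and df: "\<And>z. z \<in> cball 0 R \<Longrightarrow> (f has_derivative (\<lambda>h. G z \<bullet> h)) (at z within cball 0 R)"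
    and y: "y \<in> cball 0 R" "y \<noteq> 0" and e: "norm e = 1"
  shows "G y \<bullet> y = norm y * (G (norm y *\<^sub>R e) \<bullet> e)"
proof -
  define d where "d = y /\<^sub>R norm y"
  have nd: "norm d = 1" using y by (simp add: d_def)
  have ny: "norm y \<in> {0..R}" using y by auto
  have X1: "s' *\<^sub>R d \<in> cball 0 R" if "s' \<in> {0..R}" for s' using that nd by auto
  have X2: "s' *\<^sub>R e \<in> cball 0 R" if "s' \<in> {0..R}" for s' using that e by auto
  have yd: "norm y *\<^sub>R d = y" using y by (simp add: d_def)
  have p: "((\<lambda>s. f (s *\<^sub>R d)) has_real_derivative (G y \<bullet> d)) (at (norm y) within {0..R})"
  proof -
    have dfy: "(f has_derivative (\<lambda>h. G y \<bullet> h)) (at (norm y *\<^sub>R d) within cball 0 R)"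
      using df[OF y(1)] yd by simp
    show ?thesis using line_deriv[OF dfy X1] .
  qed
  have q: "((\<lambda>s. f (s *\<^sub>R e)) has_real_derivative (G (norm y *\<^sub>R e) \<bullet> e)) (at (norm y) within {0..R})"
    using line_deriv[OF df X2] X2[OF ny] .
  have eq: "f (s *\<^sub>R d) = f (s *\<^sub>R e)" for s
    using rad nd e unfolding radial_def by simp
  have p': "((\<lambda>s. f (s *\<^sub>R e)) has_real_derivative (G y \<bullet> d)) (at (norm y) within {0..R})"
    using p by (simp add: eq)
  have "G y \<bullet> d = G (norm y *\<^sub>R e) \<bullet> e"
    using deriv_unique_Icc[OF R ny p' q] .
  moreover have "G y \<bullet> y = norm y * (G y \<bullet> d)"
    using y by (simp add: d_def)
  ultimately show ?thesis by simp
qed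

lemma grad_profile:
  fixes f :: "real^'n \<Rightarrow> real" and G :: "real^'n \<Rightarrow> real^'n"
  assumes rad: "radial f" and R: "R > 0"
    and df: "\<And>z. z \<in> cball 0 R \<Longrightarrow> (f has_derivative (\<lambda>h. G z \<bullet> h)) (at z within cball 0 R)"
    and y: "y \<in> cball 0 R" "y \<noteq> 0" and e: "norm e = 1"
  shows "G y = ((G (norm y *\<^sub>R e) \<bullet> e) / norm y) *\<^sub>R y"
proof -
  have "G y = ((G y \<bullet> y) / (y \<bullet> y)) *\<^sub>R y" using grad_par[OF rad y df[OF y(1)]] .
  also have "G y \<bullet> y = norm y * (G (norm y *\<^sub>R e) \<bullet> e)" using profile_indep[OF rad R df y e] .
  also have "y \<bullet> y = norm y * norm y" by (simp add: power2_norm_eq_inner[symmetric] power2_eq_square)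
  finally show ?thesis using y by simp
qed

lemma grad_line:
  fixes f :: "real^'n \<Rightarrow> real" and G :: "real^'n \<Rightarrow> real^'n"
  assumes rad: "radial f" and R: "R > 0"
    and df: "\<And>z. z \<in> cball 0 R \<Longrightarrow> (f has_derivative (\<lambda>h. G z \<bullet> h)) (at z within cball 0 R)"
    and s: "\<bar>s\<bar> \<le> R" and e: "norm e = 1"
  shows "G (s *\<^sub>R e) = (G (s *\<^sub>R e) \<bullet> e) *\<^sub>R e"
proof (cases "s = 0")
  case True
  have "G 0 = 0" using grad0[OF rad R] df[of 0] R by simp
  thus ?thesis using True by simp
next
  case False
  have y: "s *\<^sub>R e \<in> cball 0 R" "s *\<^sub>R e \<noteq> 0" using s e False by auto
  have "G (s *\<^sub>R e) = ((G (s *\<^sub>R e) \<bullet> (s *\<^sub>R e)) / ((s *\<^sub>R e) \<bullet> (s *\<^sub>R e))) *\<^sub>R (s *\<^sub>R e)"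
    using grad_par[OF rad y df[OF y(1)]] .
  also have "\<dots> = (G (s *\<^sub>R e) \<bullet> e) *\<^sub>R e"
    using False e by (simp add: power2_norm_eq_inner[symmetric] power2_eq_square)
  finally show ?thesis .
qed

definition Pexp :: "real \<Rightarrow> real \<Rightarrow> real \<Rightarrow> real \<Rightarrow> real" where
  "Pexp chi U B A = (U * B) / sqrt (U\<^sup>2 + B\<^sup>2) - (chi * (U * A)) / sqrt (1 + A\<^sup>2)"

definition Eexp :: "real \<Rightarrow> real \<Rightarrow> real \<Rightarrow> real \<Rightarrow> real \<Rightarrow> real \<Rightarrow> real" where
  "Eexp chi U B B1 A A1 =
     ((U * B1 + B * B) * sqrt (U\<^sup>2 + B\<^sup>2) - (U * B) * (inverse (sqrt (U\<^sup>2 + B\<^sup>2)) / 2 * (2 * U * B + 2 * B * B1)))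
       / (sqrt (U\<^sup>2 + B\<^sup>2) * sqrt (U\<^sup>2 + B\<^sup>2))
   - (chi * (U * A1 + B * A) * sqrt (1 + A\<^sup>2) - (chi * (U * A)) * (inverse (sqrt (1 + A\<^sup>2)) / 2 * (2 * A * A1)))
       / (sqrt (1 + A\<^sup>2) * sqrt (1 + A\<^sup>2))"

lemma Eexp_B0:
  assumes U: "U > 0"
  shows "Eexp chi U 0 B1 A A1 = B1 - chi * U * A1 / (sqrt (1 + A\<^sup>2))^3"
proof -
  define M where "M = sqrt (1 + A\<^sup>2)"
  have M: "M > 0" "M\<^sup>2 = 1 + A\<^sup>2" by (auto simp: M_def add_pos_nonneg)
  have sU: "sqrt (U\<^sup>2) = U" using U by simp
  have "Eexp chi U 0 B1 A A1 = (U * B1 * U) / (U * U) - (chi * (U * A1) * M - (chi * (U * A)) * (inverse M / 2 * (2 * A * A1))) / (M * M)"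
    unfolding Eexp_def M_def[symmetric] by (simp add: sU abs_of_pos[OF U])
  also have "(U * B1 * U) / (U * U) = B1" using U by simp
  also have "(chi * (U * A1) * M - (chi * (U * A)) * (inverse M / 2 * (2 * A * A1))) / (M * M)
      = chi * U * A1 * (M\<^sup>2 - A\<^sup>2) / M^3"
  proof -
    have "chi * (U * A1) * M - (chi * (U * A)) * (inverse M / 2 * (2 * A * A1)) = chi * U * A1 * (M * M - A * A) / M"
      using M(1) by (simp add: field_simps)
    thus ?thesis using M(1) by (simp add: power2_eq_square power3_eq_cube field_simps)
  qed
  also have "M\<^sup>2 - A\<^sup>2 = 1" using M by simp
  finally show ?thesis by (simp add: M_def)
qed

lemma Pexp_B0:
  assumes U: "U > 0"
  shows "Pexp chi U 0 A = - (chi * U * A / sqrt (1 + A\<^sup>2))"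
  unfolding Pexp_def by simp

lemma Pexp_R0:
  assumes U: "U > 0" and chi: "chi > 0" and "Pexp chi U B A = 0" and "A = 0"
  shows "B = 0"
proof -
  have "U * B / sqrt (U\<^sup>2 + B\<^sup>2) = 0" using assms by (simp add: Pexp_def)
  moreover have "sqrt (U\<^sup>2 + B\<^sup>2) > 0" using U by (simp add: add_pos_nonneg)
  ultimately show ?thesis using U by simp
qed

lemma Pexp_B0A: 
  assumes U: "U > 0" and chi: "chi > 0" and "Pexp chi U 0 A = 0"
  shows "A = 0"
proof -
  have p: "1 + A\<^sup>2 > 0" by (simp add: add_pos_nonneg)
  have "chi * (U * A) / sqrt (1 + A\<^sup>2) = 0" using assms by (simp add: Pexp_def)
  thus ?thesis using U chi p by simp
qed

lemma sqrt_bound: "(A::real)\<^sup>2 / (sqrt (1 + A\<^sup>2))^3 \<le> 2 / (3 * sqrt 3)"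
proof -
  define M where "M = sqrt (1 + A\<^sup>2)"
  have M: "M > 0" "M\<^sup>2 = 1 + A\<^sup>2" by (auto simp: M_def add_pos_nonneg)
  have s3: "(sqrt 3)\<^sup>2 = (3::real)" by simp
  have "(3 * sqrt 3 * A\<^sup>2)\<^sup>2 \<le> (2 * M^3)\<^sup>2"
  proof -
    have "(3 * sqrt 3 * A\<^sup>2)\<^sup>2 = 27 * (A\<^sup>2)\<^sup>2" by (simp add: power_mult_distrib s3)
    moreover have "(2 * M^3)\<^sup>2 = 4 * (1 + A\<^sup>2)^3"
      by (simp add: power_mult_distrib M(2)[symmetric] power_mult[symmetric] mult.commute[of 3 2])
    moreover have "27 * (A\<^sup>2)\<^sup>2 \<le> 4 * (1 + A\<^sup>2)^3"
    proof -
      have "4 * (1 + A\<^sup>2)^3 - 27 * (A\<^sup>2)\<^sup>2 = (A\<^sup>2 - 2)\<^sup>2 * (4 * A\<^sup>2 + 1)"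
        by (simp add: algebra_simps power2_eq_square power3_eq_cube)
      moreover have "(A\<^sup>2 - 2)\<^sup>2 * (4 * A\<^sup>2 + 1) \<ge> 0" by simp
      ultimately show ?thesis by linarith
    qed
    ultimately show ?thesis by simp
  qed
  hence le: "3 * sqrt 3 * A\<^sup>2 \<le> 2 * M^3"
    by (rule power2_le_imp_le) (use M in simp)
  have p: "3 * sqrt 3 * M^3 > 0" using M by simp
  have "A\<^sup>2 / M^3 = (3 * sqrt 3 * A\<^sup>2) / (3 * sqrt 3 * M^3)" by simp
  also have "\<dots> \<le> (2 * M^3) / (3 * sqrt 3 * M^3)"
    using le p by (intro divide_right_mono) auto
  also have "\<dots> = 2 / (3 * sqrt 3)" using M by simp
  finally show ?thesis unfolding M_def .
qed


lemma final_ineq: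
  fixes U A A1 B1 r mu chi n :: real
  assumes U: "U > 0" and chi: "chi > 0" and mu: "mu \<ge> 0" and r: "r > 0" and n: "n \<ge> 1"
    and Ab: "A \<le> mu * r / n" and B1: "B1 \<ge> 0"
    and A1: "A1 + (n - 1) * A / r = mu - U"
  shows "B1 - chi * U * A1 / (sqrt (1 + A\<^sup>2))^3 + (n - 1) * (- (chi * U * A / sqrt (1 + A\<^sup>2))) / r
         \<ge> - (chi * mu + 2 * (n - 1) * chi * mu / (3 * sqrt 3 * n)) * U"
proof -
  define M where "M = sqrt (1 + A\<^sup>2)"
  have M: "M > 0" "M\<^sup>2 = 1 + A\<^sup>2" "M \<ge> 1" by (auto simp: M_def add_pos_nonneg)
  define X where "X = A1 / M^3 + (n - 1) * (A / r) / M"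
  have M3: "M^3 \<ge> 1" using M(3) by (simp add: one_le_power)
  have X: "X = (mu - U) / M^3 + (n - 1) * (A / r) * (A\<^sup>2 / M^3)"
  proof -
    have A1e: "A1 = mu - U - (n - 1) * A / r" using A1 by simp
    have "X = (mu - U - (n - 1) * A / r) / M^3 + (n - 1) * (A / r) / M" by (simp add: X_def A1e)
    also have "\<dots> = (mu - U) / M^3 + (n - 1) * (A / r) * (1 / M - 1 / M^3)"
      using M(1) r by (simp add: field_simps)
    finally have "X = (mu - U) / M^3 + (n - 1) * (A / r) * (1 / M - 1 / M^3)" .
    moreover have "1 / M - 1 / M^3 = A\<^sup>2 / M^3"
    proof -
      have "1 / M - 1 / M^3 = (M\<^sup>2 - 1) / M^3" using M(1) by (simp add: field_simps power2_eq_square power3_eq_cube)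
      also have "M\<^sup>2 - 1 = A\<^sup>2" using M(2) by simp
      finally show ?thesis .
    qed
    ultimately show ?thesis by simp
  qed
  have t1: "(mu - U) / M^3 \<le> mu"
  proof (cases "mu - U \<ge> 0")
    case True
    have "(mu - U) / M^3 \<le> (mu - U) / 1" using divide_left_mono[of 1 "M^3" "mu - U"] M3 True M(1) by simp
    hence "(mu - U) / M^3 \<le> mu - U" by simp
    thus ?thesis using U by linarith
  next
    case False
    hence "(mu - U) / M^3 \<le> 0" using M3 M(1) by (intro divide_nonpos_pos) auto
    thus ?thesis using mu by linarith
  qed
  have sb: "A\<^sup>2 / M^3 \<le> 2 / (3 * sqrt 3)" using sqrt_bound[of A] by (simp add: M_def)
  have sb0: "A\<^sup>2 / M^3 \<ge> 0" using M by simp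
  have t2: "(n - 1) * (A / r) * (A\<^sup>2 / M^3) \<le> (n - 1) * (mu / n) * (2 / (3 * sqrt 3))"
  proof (cases "A \<ge> 0")
    case True
    have "A / r \<le> mu / n" using Ab r n by (simp add: divide_le_eq field_simps)
    hence "(A / r) * (A\<^sup>2 / M^3) \<le> (mu / n) * (2 / (3 * sqrt 3))"
      using True r sb sb0 mu n by (intro mult_mono) auto
    hence "(n - 1) * ((A / r) * (A\<^sup>2 / M^3)) \<le> (n - 1) * ((mu / n) * (2 / (3 * sqrt 3)))"
      using n by (intro mult_left_mono) auto
    thus ?thesis by (simp only: mult.assoc)
  next
    case False
    hence "A / r \<le> 0" using r by (intro divide_nonpos_pos) auto
    hence h0: "(A / r) * (A\<^sup>2 / M^3) \<le> 0" using sb0 by (rule mult_nonpos_nonneg)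
    have nn: "0 \<le> n - 1" using n by simp
    have "(n - 1) * ((A / r) * (A\<^sup>2 / M^3)) \<le> 0" using mult_nonneg_nonpos[OF nn h0] .
    moreover have "(n - 1) * (mu / n) * (2 / (3 * sqrt 3)) \<ge> 0" using n mu by simp
    ultimately show ?thesis by (simp add: mult.assoc)
  qed
  have Xb: "X \<le> mu + 2 * (n - 1) * mu / (3 * sqrt 3 * n)"
  proof -
    have "(n - 1) * (mu / n) * (2 / (3 * sqrt 3)) = 2 * (n - 1) * mu / (3 * sqrt 3 * n)"
      by (simp add: field_simps)
    thus ?thesis using X t1 t2 by linarith
  qed
  have lhs: "B1 - chi * U * A1 / M^3 + (n - 1) * (- (chi * U * A / M)) / r = B1 - chi * U * X"
    unfolding X_def by (simp add: field_simps)
  have "chi * U * X \<le> chi * U * (mu + 2 * (n - 1) * mu / (3 * sqrt 3 * n))"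
    using Xb chi U by simp
  hence "B1 - chi * U * X \<ge> - (chi * mu + 2 * (n - 1) * chi * mu / (3 * sqrt 3 * n)) * U"
    using B1 by (simp add: algebra_simps)
  thus ?thesis using lhs by (simp add: M_def)
qed

locale radsol =
  fixes R chi mu :: real and T :: ereal
    and u0 :: "real^'n \<Rightarrow> real"
    and u v ut :: "real^'n \<Rightarrow> real \<Rightarrow> real"
    and gu gv :: "real^'n \<Rightarrow> real \<Rightarrow> real^'n"
    and Hu Hv :: "real^'n \<Rightarrow> real \<Rightarrow> real^'n^'n"
  assumes R: "R > 0" and chi: "chi > 0" and T: "0 < T"
    and cu: "continuous_on {(x,t). x \<in> cball 0 R \<and> 0 \<le> t \<and> ereal t < T} (\<lambda>(x,t). u x t)"
    and cgu: "continuous_on {(x,t). x \<in> cball 0 R \<and> 0 \<le> t \<and> ereal t < T} (\<lambda>(x,t). gu x t)"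
    and cHu: "continuous_on {(x,t). x \<in> cball 0 R \<and> 0 \<le> t \<and> ereal t < T} (\<lambda>(x,t). Hu x t)"
    and cut: "continuous_on {(x,t). x \<in> cball 0 R \<and> 0 \<le> t \<and> ereal t < T} (\<lambda>(x,t). ut x t)"
    and cgv: "continuous_on {(x,t). x \<in> cball 0 R \<and> 0 \<le> t \<and> ereal t < T} (\<lambda>(x,t). gv x t)"
    and cHv: "continuous_on {(x,t). x \<in> cball 0 R \<and> 0 \<le> t \<and> ereal t < T} (\<lambda>(x,t). Hv x t)"
    and du: "\<And>x t. x \<in> cball 0 R \<Longrightarrow> 0 \<le> t \<Longrightarrow> ereal t < T \<Longrightarrow>
               ((\<lambda>y. u y t) has_derivative (\<lambda>h. gu x t \<bullet> h)) (at x within cball 0 R)"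
    and dgu: "\<And>x t. x \<in> cball 0 R \<Longrightarrow> 0 \<le> t \<Longrightarrow> ereal t < T \<Longrightarrow>
               ((\<lambda>y. gu y t) has_derivative (\<lambda>h. Hu x t *v h)) (at x within cball 0 R)"
    and dut: "\<And>x t. x \<in> cball 0 R \<Longrightarrow> 0 \<le> t \<Longrightarrow> ereal t < T \<Longrightarrow>
               ((\<lambda>s. u x s) has_real_derivative ut x t) (at t within {t. 0 \<le> t \<and> ereal t < T})"
    and dv: "\<And>x t. x \<in> cball 0 R \<Longrightarrow> 0 \<le> t \<Longrightarrow> ereal t < T \<Longrightarrow>
               ((\<lambda>y. v y t) has_derivative (\<lambda>h. gv x t \<bullet> h)) (at x within cball 0 R)"
    and dgv: "\<And>x t. x \<in> cball 0 R \<Longrightarrow> 0 \<le> t \<Longrightarrow> ereal t < T \<Longrightarrow>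
               ((\<lambda>y. gv y t) has_derivative (\<lambda>h. Hv x t *v h)) (at x within cball 0 R)"
    and upos: "\<And>x t. x \<in> cball 0 R \<Longrightarrow> 0 \<le> t \<Longrightarrow> ereal t < T \<Longrightarrow> u x t > 0"
    and radu: "\<And>t. 0 \<le> t \<Longrightarrow> ereal t < T \<Longrightarrow> radial (\<lambda>x. u x t)"
    and radv: "\<And>t. 0 \<le> t \<Longrightarrow> ereal t < T \<Longrightarrow> radial (\<lambda>x. v x t)"
    and divg: "\<And>x t. x \<in> ball 0 R \<Longrightarrow> 0 < t \<Longrightarrow> ereal t < T \<Longrightarrow>
               has_divergence (\<lambda>y. flux chi (u y t) (gu y t) (gv y t)) (ut x t) x"
    and veq: "\<And>x t. x \<in> ball 0 R \<Longrightarrow> 0 < t \<Longrightarrow> ereal t < T \<Longrightarrow>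
               0 = (\<Sum>i\<in>UNIV. Hv x t $ i $ i) - mu + u x t"
    and bc: "\<And>x t. norm x = R \<Longrightarrow> 0 < t \<Longrightarrow> ereal t < T \<Longrightarrow>
               flux chi (u x t) (gu x t) (gv x t) \<bullet> ((1/R) *\<^sub>R x) = 0"
    and init: "\<And>x. x \<in> cball 0 R \<Longrightarrow> u x 0 = u0 x"
    and neu: "neumann_zero R u0"
begin

definition "Ur e t s = u (s *\<^sub>R e) t"
definition "Br e t s = gu (s *\<^sub>R e) t \<bullet> e"
definition "B1 e t s = (Hu (s *\<^sub>R e) t *v e) \<bullet> e"
definition "Ar e t s = gv (s *\<^sub>R e) t \<bullet> e"
definition "A1 e t s = (Hv (s *\<^sub>R e) t *v e) \<bullet> e"
definition "Ph e t s = Pexp chi (Ur e t s) (Br e t s) (Ar e t s)"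
definition "Ed e t s = Eexp chi (Ur e t s) (Br e t s) (B1 e t s) (Ar e t s) (A1 e t s)"

abbreviation "X \<equiv> {-R..R}"

lemma inX: "norm e = 1 \<Longrightarrow> s \<in> X \<Longrightarrow> s *\<^sub>R e \<in> cball 0 R"
  by auto

lemma dUr: "norm e = 1 \<Longrightarrow> 0 \<le> t \<Longrightarrow> ereal t < T \<Longrightarrow> s \<in> X \<Longrightarrow>
    (Ur e t has_real_derivative Br e t s) (at s within X)"
  unfolding Ur_def[abs_def] Br_def
  by (rule line_deriv[OF du[OF inX]]) (auto intro: inX)

lemma dBr: "norm e = 1 \<Longrightarrow> 0 \<le> t \<Longrightarrow> ereal t < T \<Longrightarrow> s \<in> X \<Longrightarrow>
    (Br e t has_real_derivative B1 e t s) (at s within X)"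
  unfolding B1_def Br_def[abs_def]
  by (rule line_deriv_vec[OF dgu[OF inX]]) (auto intro: inX)

lemma dAr: "norm e = 1 \<Longrightarrow> 0 \<le> t \<Longrightarrow> ereal t < T \<Longrightarrow> s \<in> X \<Longrightarrow>
    (Ar e t has_real_derivative A1 e t s) (at s within X)"
  unfolding A1_def Ar_def[abs_def]
  by (rule line_deriv_vec[OF dgv[OF inX]]) (auto intro: inX)

lemma upos': "norm e = 1 \<Longrightarrow> 0 \<le> t \<Longrightarrow> ereal t < T \<Longrightarrow> s \<in> X \<Longrightarrow> Ur e t s > 0"
  unfolding Ur_def by (rule upos[OF inX])

lemma cont_line:
  fixes F :: "real^'n \<Rightarrow> real \<Rightarrow> 'b::topological_space"
  assumes c: "continuous_on {(x,t). x \<in> cball 0 R \<and> 0 \<le> t \<and> ereal t < T} (\<lambda>(x,t). F x t)"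
    and e: "norm e = 1" and t: "0 \<le> t" "ereal t < T"
  shows "continuous_on X (\<lambda>s. F (s *\<^sub>R e) t)"
proof -
  have "continuous_on X (\<lambda>s. (\<lambda>(x,t). F x t) (s *\<^sub>R e, t))"
    by (rule continuous_on_compose2[OF c]) (use e t in \<open>auto intro!: continuous_intros\<close>)
  thus ?thesis by simp
qed

lemma cont_time:
  fixes F :: "real^'n \<Rightarrow> real \<Rightarrow> 'b::topological_space"
  assumes c: "continuous_on {(x,t). x \<in> cball 0 R \<and> 0 \<le> t \<and> ereal t < T} (\<lambda>(x,t). F x t)"
    and x: "x \<in> cball 0 R"
  shows "continuous_on {t. 0 \<le> t \<and> ereal t < T} (\<lambda>t. F x t)"
proof -
  have "continuous_on {t. 0 \<le> t \<and> ereal t < T} (\<lambda>t. (\<lambda>(x,t). F x t) (x, t))"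
    by (rule continuous_on_compose2[OF c]) (use x in \<open>auto intro!: continuous_intros\<close>)
  thus ?thesis by simp
qed

lemma mv_inner: "((M::real^'n^'n) *v e) \<bullet> e = (\<Sum>i\<in>UNIV. \<Sum>j\<in>UNIV. M $ i $ j * e $ j * e $ i)"
  by (simp add: matrix_vector_mult_def inner_vec_def sum_distrib_right)

lemma cUr: "norm e = 1 \<Longrightarrow> 0 \<le> t \<Longrightarrow> ereal t < T \<Longrightarrow> continuous_on X (Ur e t)"
  unfolding Ur_def[abs_def] by (rule cont_line[OF cu])
lemma cBr: "norm e = 1 \<Longrightarrow> 0 \<le> t \<Longrightarrow> ereal t < T \<Longrightarrow> continuous_on X (Br e t)"
  unfolding Br_def[abs_def] by (intro continuous_intros cont_line[OF cgu])
lemma cB1: "norm e = 1 \<Longrightarrow> 0 \<le> t \<Longrightarrow> ereal t < T \<Longrightarrow> continuous_on X (B1 e t)"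
  unfolding B1_def[abs_def] mv_inner by (intro continuous_intros cont_line[OF cHu])
lemma cAr: "norm e = 1 \<Longrightarrow> 0 \<le> t \<Longrightarrow> ereal t < T \<Longrightarrow> continuous_on X (Ar e t)"
  unfolding Ar_def[abs_def] by (intro continuous_intros cont_line[OF cgv])
lemma cA1: "norm e = 1 \<Longrightarrow> 0 \<le> t \<Longrightarrow> ereal t < T \<Longrightarrow> continuous_on X (A1 e t)"
  unfolding A1_def[abs_def] mv_inner by (intro continuous_intros cont_line[OF cHv])

lemma cPh: assumes e: "norm e = 1" and t: "0 \<le> t" "ereal t < T"
  shows "continuous_on X (Ph e t)"
proof -
  have p1: "\<forall>s\<in>X. sqrt ((Ur e t s)\<^sup>2 + (Br e t s)\<^sup>2) \<noteq> 0"
  proof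
    fix s assume "s \<in> X"
    hence "Ur e t s > 0" by (rule upos'[OF e t])
    hence "(Ur e t s)\<^sup>2 + (Br e t s)\<^sup>2 > 0" by (simp add: add_pos_nonneg)
    thus "sqrt ((Ur e t s)\<^sup>2 + (Br e t s)\<^sup>2) \<noteq> 0" using real_sqrt_gt_zero by fastforce
  qed
  have p2: "\<forall>s\<in>X. sqrt (1 + (Ar e t s)\<^sup>2) \<noteq> 0"
  proof
    fix s have "1 + (Ar e t s)\<^sup>2 > 0" by (simp add: add_pos_nonneg)
    thus "sqrt (1 + (Ar e t s)\<^sup>2) \<noteq> 0" using real_sqrt_gt_zero by fastforce
  qed
  show ?thesis unfolding Ph_def[abs_def] Pexp_def
    using cUr[OF e t] cBr[OF e t] cAr[OF e t] p1 p2
    by (intro continuous_intros) auto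
qed

lemma cEd: assumes e: "norm e = 1" and t: "0 \<le> t" "ereal t < T"
  shows "continuous_on X (Ed e t)"
proof -
  have p1: "\<forall>s\<in>X. sqrt ((Ur e t s)\<^sup>2 + (Br e t s)\<^sup>2) \<noteq> 0"
  proof
    fix s assume "s \<in> X"
    hence "Ur e t s > 0" by (rule upos'[OF e t])
    hence "(Ur e t s)\<^sup>2 + (Br e t s)\<^sup>2 > 0" by (simp add: add_pos_nonneg)
    thus "sqrt ((Ur e t s)\<^sup>2 + (Br e t s)\<^sup>2) \<noteq> 0" using real_sqrt_gt_zero by fastforce
  qed
  have p2: "\<forall>s\<in>X. sqrt (1 + (Ar e t s)\<^sup>2) \<noteq> 0"
  proof
    fix s have "1 + (Ar e t s)\<^sup>2 > 0" by (simp add: add_pos_nonneg)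
    thus "sqrt (1 + (Ar e t s)\<^sup>2) \<noteq> 0" using real_sqrt_gt_zero by fastforce
  qed
  show ?thesis unfolding Ed_def[abs_def] Eexp_def
    using cUr[OF e t] cBr[OF e t] cAr[OF e t] cB1[OF e t] cA1[OF e t] p1 p2
    by (intro continuous_intros) auto
qed

lemma dPh: assumes e: "norm e = 1" and t: "0 \<le> t" "ereal t < T" and s: "s \<in> X"
  shows "(Ph e t has_real_derivative Ed e t s) (at s within X)"
proof -
  note dU = dUr[OF e t s] and dB = dBr[OF e t s] and dA = dAr[OF e t s]
  let ?U = "Ur e t s" and ?B = "Br e t s" and ?A = "Ar e t s" and ?b1 = "B1 e t s" and ?a1 = "A1 e t s"
  have Up: "?U > 0" using upos'[OF e t s] .
  have pN: "?U\<^sup>2 + ?B\<^sup>2 > 0" using Up by (simp add: add_pos_nonneg)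
  have pM: "1 + ?A\<^sup>2 > 0" by (simp add: add_pos_nonneg)
  have N2: "((\<lambda>s. (Ur e t s)\<^sup>2 + (Br e t s)\<^sup>2) has_real_derivative (2 * ?U * ?B + 2 * ?B * ?b1)) (at s within X)"
  proof -
    have "((\<lambda>s. Ur e t s * Ur e t s + Br e t s * Br e t s) has_real_derivative
        (?U * ?B + ?B * ?U) + (?B * ?b1 + ?b1 * ?B)) (at s within X)"
      by (intro DERIV_add DERIV_mult' dU dB)
    thus ?thesis by (simp add: power2_eq_square algebra_simps)
  qed
  have N: "((\<lambda>s. sqrt ((Ur e t s)\<^sup>2 + (Br e t s)\<^sup>2)) has_real_derivative
      (inverse (sqrt (?U\<^sup>2 + ?B\<^sup>2)) / 2 * (2 * ?U * ?B + 2 * ?B * ?b1))) (at s within X)"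
    using DERIV_chain2[OF DERIV_real_sqrt[OF pN] N2] .
  have P: "((\<lambda>s. Ur e t s * Br e t s) has_real_derivative (?U * ?b1 + ?B * ?B)) (at s within X)"
    using DERIV_mult'[OF dU dB] .
  have M2: "((\<lambda>s. 1 + (Ar e t s)\<^sup>2) has_real_derivative (2 * ?A * ?a1)) (at s within X)"
  proof -
    have "((\<lambda>s. 1 + Ar e t s * Ar e t s) has_real_derivative 0 + (?A * ?a1 + ?a1 * ?A)) (at s within X)"
      by (intro DERIV_add DERIV_mult' dA DERIV_const)
    thus ?thesis by (simp add: power2_eq_square algebra_simps)
  qed
  have M: "((\<lambda>s. sqrt (1 + (Ar e t s)\<^sup>2)) has_real_derivative
      (inverse (sqrt (1 + ?A\<^sup>2)) / 2 * (2 * ?A * ?a1))) (at s within X)"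
    using DERIV_chain2[OF DERIV_real_sqrt[OF pM] M2] .
  have Q: "((\<lambda>s. chi * (Ur e t s * Ar e t s)) has_real_derivative chi * (?U * ?a1 + ?B * ?A)) (at s within X)"
    using DERIV_cmult[OF DERIV_mult'[OF dU dA], of chi] .
  have nz1: "sqrt (?U\<^sup>2 + ?B\<^sup>2) \<noteq> 0" using real_sqrt_gt_zero[OF pN] by linarith
  have nz2: "sqrt (1 + ?A\<^sup>2) \<noteq> 0" using pM by simp
  have D: "((\<lambda>s. Ur e t s * Br e t s / sqrt ((Ur e t s)\<^sup>2 + (Br e t s)\<^sup>2) - chi * (Ur e t s * Ar e t s) / sqrt (1 + (Ar e t s)\<^sup>2))
     has_real_derivative Ed e t s) (at s within X)"
    unfolding Ed_def Eexp_def
    by (rule DERIV_diff[OF DERIV_divide[OF P N nz1] DERIV_divide[OF Q M nz2]])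
  have "Ph e t = (\<lambda>s. Ur e t s * Br e t s / sqrt ((Ur e t s)\<^sup>2 + (Br e t s)\<^sup>2) - chi * (Ur e t s * Ar e t s) / sqrt (1 + (Ar e t s)\<^sup>2))"
    by (simp add: fun_eq_iff Ph_def Pexp_def)
  thus ?thesis using D by simp
qed

end

context radsol begin

lemma du': "0 \<le> t \<Longrightarrow> ereal t < T \<Longrightarrow> z \<in> cball 0 R \<Longrightarrow>
   ((\<lambda>y. u y t) has_derivative (\<lambda>h. gu z t \<bullet> h)) (at z within cball 0 R)"
  using du by blast
lemma dv': "0 \<le> t \<Longrightarrow> ereal t < T \<Longrightarrow> z \<in> cball 0 R \<Longrightarrow>
   ((\<lambda>y. v y t) has_derivative (\<lambda>h. gv z t \<bullet> h)) (at z within cball 0 R)"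
  using dv by blast

lemma gu_line: assumes e: "norm e = 1" and t: "0 \<le> t" "ereal t < T" and s: "\<bar>s\<bar> \<le> R"
  shows "gu (s *\<^sub>R e) t = Br e t s *\<^sub>R e"
  unfolding Br_def using grad_line[OF radu[OF t] R du'[OF t] s e] .

lemma gv_line: assumes e: "norm e = 1" and t: "0 \<le> t" "ereal t < T" and s: "\<bar>s\<bar> \<le> R"
  shows "gv (s *\<^sub>R e) t = Ar e t s *\<^sub>R e"
  unfolding Ar_def using grad_line[OF radv[OF t] R dv'[OF t] s e] .

lemma gu_prof: assumes e: "norm e = 1" and t: "0 \<le> t" "ereal t < T" and y: "y \<in> cball 0 R" "y \<noteq> 0"
  shows "gu y t = (Br e t (norm y) / norm y) *\<^sub>R y"
  unfolding Br_def using grad_profile[OF radu[OF t] R du'[OF t] y e] .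

lemma gv_prof: assumes e: "norm e = 1" and t: "0 \<le> t" "ereal t < T" and y: "y \<in> cball 0 R" "y \<noteq> 0"
  shows "gv y t = (Ar e t (norm y) / norm y) *\<^sub>R y"
  unfolding Ar_def using grad_profile[OF radv[OF t] R dv'[OF t] y e] .

lemma u_prof: assumes e: "norm e = 1" and t: "0 \<le> t" "ereal t < T" shows "u y t = Ur e t (norm y)"
proof -
  have "norm (norm y *\<^sub>R e) = norm y" using e by simp
  thus ?thesis using radu[OF t] unfolding radial_def Ur_def by metis
qed

lemma flux_prof:
  assumes e: "norm e = 1" and t: "0 \<le> t" "ereal t < T" and y: "y \<in> cball 0 R" "y \<noteq> 0"
  shows "flux chi (u y t) (gu y t) (gv y t) = (Ph e t (norm y) / norm y) *\<^sub>R y"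
proof -
  let ?r = "norm y"
  let ?U = "Ur e t ?r" and ?B = "Br e t ?r" and ?A = "Ar e t ?r"
  have r: "?r > 0" using y by simp
  have gu: "gu y t = (?B / ?r) *\<^sub>R y" using gu_prof[OF e t y] .
  have gv: "gv y t = (?A / ?r) *\<^sub>R y" using gv_prof[OF e t y] .
  have ngu: "(norm (gu y t))\<^sup>2 = ?B\<^sup>2" using r by (simp add: gu power_mult_distrib power_divide)
  have ngv: "(norm (gv y t))\<^sup>2 = ?A\<^sup>2" using r by (simp add: gv power_mult_distrib power_divide)
  have uy: "u y t = ?U" using u_prof[OF e t] .
  have "flux chi (u y t) (gu y t) (gv y t) =
     (?U / sqrt (?U\<^sup>2 + ?B\<^sup>2)) *\<^sub>R ((?B / ?r) *\<^sub>R y) - (chi * ?U / sqrt (1 + ?A\<^sup>2)) *\<^sub>R ((?A / ?r) *\<^sub>R y)"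
    unfolding flux_def ngu ngv uy by (simp add: gu gv)
  also have "\<dots> = (Ph e t ?r / ?r) *\<^sub>R y"
    unfolding Ph_def Pexp_def scaleR_scaleR scaleR_diff_left[symmetric]
  proof (rule arg_cong[where f="\<lambda>c. c *\<^sub>R y"])
    have a: "0 \<le> ?r" by simp
    have b: "?r \<le> R" using y by simp
    have rX: "?r \<in> X" unfolding atLeastAtMost_iff using a b R by linarith
    have Up: "?U > 0" using upos'[OF e t rX] .
    have N: "sqrt (?U\<^sup>2 + ?B\<^sup>2) > 0" using Up by (simp add: add_pos_nonneg)
    have M: "sqrt (1 + ?A\<^sup>2) > 0" by (simp add: add_pos_nonneg)
    show "?U / sqrt (?U\<^sup>2 + ?B\<^sup>2) * (?B / ?r) - chi * ?U / sqrt (1 + ?A\<^sup>2) * (?A / ?r) =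
      (?U * ?B / sqrt (?U\<^sup>2 + ?B\<^sup>2) - chi * (?U * ?A) / sqrt (1 + ?A\<^sup>2)) / ?r"
      using N M r by (simp add: field_simps)
  qed
  finally show ?thesis .
qed

lemma flux_line:
  assumes e: "norm e = 1" and t: "0 \<le> t" "ereal t < T" and s: "\<bar>s\<bar> \<le> R"
  shows "flux chi (u (s *\<^sub>R e) t) (gu (s *\<^sub>R e) t) (gv (s *\<^sub>R e) t) \<bullet> e = Ph e t s"
proof -
  have ee: "e \<bullet> e = 1" using e by (simp add: power2_norm_eq_inner[symmetric])
  have ngu: "(norm (gu (s *\<^sub>R e) t))\<^sup>2 = (Br e t s)\<^sup>2" using e by (simp add: gu_line[OF e t s] power_mult_distrib)
  have ngv: "(norm (gv (s *\<^sub>R e) t))\<^sup>2 = (Ar e t s)\<^sup>2" using e by (simp add: gv_line[OF e t s] power_mult_distrib)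
  show ?thesis
    unfolding flux_def ngu ngv
    by (simp add: gu_line[OF e t s] gv_line[OF e t s] inner_diff_left ee Ph_def Pexp_def Ur_def)
qed

lemma gu0: "0 \<le> t \<Longrightarrow> ereal t < T \<Longrightarrow> gu 0 t = 0"
  using grad0[OF radu R] du'[of t 0] R by simp
lemma gv0: "0 \<le> t \<Longrightarrow> ereal t < T \<Longrightarrow> gv 0 t = 0"
  using grad0[OF radv R] dv'[of t 0] R by simp

lemma Br0: "0 \<le> t \<Longrightarrow> ereal t < T \<Longrightarrow> Br e t 0 = 0"
  by (simp add: Br_def gu0)
lemma Ar0: "0 \<le> t \<Longrightarrow> ereal t < T \<Longrightarrow> Ar e t 0 = 0"
  by (simp add: Ar_def gv0)
lemma Ph0: "0 \<le> t \<Longrightarrow> ereal t < T \<Longrightarrow> Ph e t 0 = 0"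
  by (simp add: Ph_def Pexp_def Br0 Ar0)

lemma interior_X: "s \<in> {-R<..<R} \<Longrightarrow> at s within X = at s"
  by (intro at_within_interior) auto

lemma radial_pde:
  assumes e: "norm e = 1" and t: "0 < t" "ereal t < T" and s: "0 < s" "s < R"
  shows "ut (s *\<^sub>R e) t = Ed e t s + (real CARD('n) - 1) * Ph e t s / s"
proof -
  have t0: "0 \<le> t" using t by simp
  let ?x = "s *\<^sub>R e"
  have x: "?x \<in> ball 0 R" using e s by simp
  have nx: "norm ?x = s" using e s by simp
  obtain DG where DG: "((\<lambda>y. flux chi (u y t) (gu y t) (gv y t)) has_derivative DG) (at ?x)"
    and ut: "ut ?x t = (\<Sum>i\<in>UNIV. DG (axis i 1) $ i)"
    using divg[OF x t] unfolding has_divergence_def by blast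
  have dP: "(Ph e t has_real_derivative Ed e t s) (at (norm ?x))"
    using dPh[OF e t0 t(2), of s] s interior_X[of s] nx by simp
  have "(\<Sum>i\<in>UNIV. DG (axis i 1) $ i) = Ed e t s + (real CARD('n) - 1) * Ph e t (norm ?x) / norm ?x"
  proof (rule trace_radial[OF _ _ _ _ dP DG])
    show "?x \<noteq> 0" using nx s by auto
    show "open (ball 0 R - {0::real^'n})" by (simp add: open_Diff)
    show "?x \<in> ball 0 R - {0}" using x nx s by auto
    fix y :: "real^'n" assume "y \<in> ball 0 R - {0}"
    thus "flux chi (u y t) (gu y t) (gv y t) = (Ph e t (norm y) / norm y) *\<^sub>R y"
      using flux_prof[OF e t0 t(2)] by auto
  qed
  thus ?thesis using ut nx by simp
qed

lemma trace_mat: "(\<Sum>i\<in>UNIV. ((M::real^'n^'n) *v axis i 1) $ i) = (\<Sum>i\<in>UNIV. M $ i $ i)"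
  by (simp add: matrix_vector_mult_basis column_def)

lemma radial_veq:
  assumes e: "norm e = 1" and t: "0 < t" "ereal t < T" and s: "0 < s" "s < R"
  shows "A1 e t s + (real CARD('n) - 1) * Ar e t s / s = mu - Ur e t s"
proof -
  have t0: "0 \<le> t" using t by simp
  let ?x = "s *\<^sub>R e"
  have x: "?x \<in> ball 0 R" using e s by simp
  have xc: "?x \<in> cball 0 R" using x by simp
  have nx: "norm ?x = s" using e s by simp
  have ai: "at ?x within cball 0 R = at ?x" using x by (intro at_within_interior) simp
  have DG: "((\<lambda>y. gv y t) has_derivative (\<lambda>h. Hv ?x t *v h)) (at ?x)"
    using dgv[OF xc t0 t(2)] unfolding ai .
  have dA: "(Ar e t has_real_derivative A1 e t s) (at (norm ?x))"
    using dAr[OF e t0 t(2), of s] s interior_X[of s] nx by simp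
  have "(\<Sum>i\<in>UNIV. (Hv ?x t *v axis i 1) $ i) = A1 e t s + (real CARD('n) - 1) * Ar e t (norm ?x) / norm ?x"
  proof (rule trace_radial[OF _ _ _ _ dA DG])
    show "?x \<noteq> 0" using nx s by auto
    show "open (ball 0 R - {0::real^'n})" by (simp add: open_Diff)
    show "?x \<in> ball 0 R - {0}" using x nx s by auto
    fix y :: "real^'n" assume "y \<in> ball 0 R - {0}"
    thus "gv y t = (Ar e t (norm y) / norm y) *\<^sub>R y"
      using gv_prof[OF e t0 t(2)] by auto
  qed
  moreover have "(\<Sum>i\<in>UNIV. Hv ?x t $ i $ i) = mu - u ?x t" using veq[OF x t] by simp
  ultimately show ?thesis using nx by (simp add: trace_mat Ur_def)
qed

lemma bcPh: assumes e: "norm e = 1" and t: "0 < t" "ereal t < T"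
  shows "Ph e t R = 0"
proof -
  have "flux chi (u (R *\<^sub>R e) t) (gu (R *\<^sub>R e) t) (gv (R *\<^sub>R e) t) \<bullet> ((1/R) *\<^sub>R (R *\<^sub>R e)) = 0"
    using bc[of "R *\<^sub>R e" t] e t R by simp
  moreover have "(1/R) *\<^sub>R (R *\<^sub>R e) = e" using R by simp
  ultimately show ?thesis using flux_line[OF e _ t(2), of R] t R by simp
qed

end

lemma pw_deriv:
  assumes s: "0 < (s::real)" and n: "1 \<le> n"
  shows "real (n - 1) * s ^ (n - 1 - Suc 0) = (real n - 1) * s ^ (n - 1) / s"
proof (cases n)
  case 0 thus ?thesis using n by simp
next
  case (Suc m)
  show ?thesis
  proof (cases m)
    case 0 thus ?thesis using Suc by simp
  next
    case (Suc k)
    thus ?thesis using \<open>n = Suc m\<close> s by (simp add: field_simps)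
  qed
qed

lemma card_ge1: "1 \<le> CARD('n::finite)"
  using zero_less_card_finite[where 'a='n] by linarith

lemma cont_zero:
  fixes f :: "real \<Rightarrow> real" and T :: ereal
  assumes T: "0 < T" and c: "continuous_on {t. 0 \<le> t \<and> ereal t < T} f"
    and eq: "\<And>t. 0 < t \<Longrightarrow> ereal t < T \<Longrightarrow> f t = k"
  shows "f 0 = k"
proof (rule ccontr)
  assume ne: "f 0 \<noteq> k"
  obtain T1 where T1: "0 < ereal T1" "ereal T1 < T" using ereal_dense2[OF T] by auto
  have T1p: "T1 > 0" using T1 by simp
  have z: "0 \<in> {t. 0 \<le> t \<and> ereal t < T}" using T by (simp add: zero_ereal_def)
  have "\<forall>\<epsilon>>0. \<exists>\<delta>>0. \<forall>x'\<in>{t. 0 \<le> t \<and> ereal t < T}. dist x' 0 < \<delta> \<longrightarrow> dist (f x') (f 0) < \<epsilon>"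
    using c z unfolding continuous_on_iff by blast
  moreover have "dist k (f 0) > 0" using ne by simp
  ultimately obtain d where d: "d > 0" and dd: "\<And>x'. x' \<in> {t. 0 \<le> t \<and> ereal t < T} \<Longrightarrow> dist x' 0 < d \<Longrightarrow> dist (f x') (f 0) < dist k (f 0)"
    by blast
  define t where "t = min (d/2) (T1/2)"
  have t: "0 < t" "t < d" "t \<le> T1/2" using d T1p by (auto simp: t_def)
  have "ereal t \<le> ereal T1" using t T1p by simp
  hence tT: "ereal t < T" using T1(2) by (rule le_less_trans)
  have "dist (f t) (f 0) < dist k (f 0)" using dd[of t] t tT by (simp add: dist_real_def)
  thus False using eq[OF t(1) tT] by simp
qed

context radsol begin

lemma tI_le: "0 < t1 \<Longrightarrow> ereal t1 < T \<Longrightarrow> 0 \<le> t \<Longrightarrow> t \<le> t1 \<Longrightarrow> ereal t < T"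
  by (meson ereal_less_eq(3) le_less_trans)

lemma Br_R_init: assumes e: "norm e = 1" shows "Br e 0 R = 0"
proof -
  have T0: "ereal 0 < T" using T by (simp add: zero_ereal_def)
  have nx: "norm (R *\<^sub>R e) = R" using e R by simp
  obtain Df where Df: "(u0 has_derivative Df) (at (R *\<^sub>R e) within cball 0 R)" and D0: "Df ((1/R) *\<^sub>R (R *\<^sub>R e)) = 0"
    using neu nx unfolding neumann_zero_def by blast
  have De: "Df e = 0" using D0 R by simp
  have bl: "bounded_linear Df" using Df by (rule has_derivative_bounded_linear)
  have l: "((\<lambda>s::real. s *\<^sub>R e) has_derivative (\<lambda>h. h *\<^sub>R e)) (at R within {0..R})"
    by (intro has_derivative_scaleR_left has_derivative_ident)
  have sub: "(\<lambda>s. s *\<^sub>R e) ` {0..R} \<subseteq> cball 0 R" using e by auto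
  have "((u0 \<circ> (\<lambda>s. s *\<^sub>R e)) has_derivative (Df \<circ> (\<lambda>h. h *\<^sub>R e))) (at R within {0..R})"
    using diff_chain_within[OF l has_derivative_subset[OF Df sub]] .
  moreover have "Df \<circ> (\<lambda>h. h *\<^sub>R e) = (*) 0"
    using bl De by (simp add: fun_eq_iff linear_simps)
  ultimately have d1: "((\<lambda>s. u0 (s *\<^sub>R e)) has_real_derivative 0) (at R within {0..R})"
    by (simp add: has_field_derivative_def o_def)
  have d2: "(Ur e 0 has_real_derivative Br e 0 R) (at R within {0..R})"
    using DERIV_subset[OF dUr[OF e _ T0] ] R by auto
  have d2': "((\<lambda>s. u0 (s *\<^sub>R e)) has_real_derivative Br e 0 R) (at R within {0..R})"
  proof -
    have "((\<lambda>s. u0 (s *\<^sub>R e)) has_derivative (*) (Br e 0 R)) (at R within {0..R})"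
      by (rule has_derivative_transform[OF _ _ d2[unfolded has_field_derivative_def]])
        (use R e in \<open>auto simp: Ur_def init\<close>)
    thus ?thesis by (simp add: has_field_derivative_def)
  qed
  show ?thesis using deriv_unique_Icc[OF R _ d2' d1] R by simp
qed

lemma cPhR: assumes e: "norm e = 1" shows "continuous_on {t. 0 \<le> t \<and> ereal t < T} (\<lambda>t. Ph e t R)"
proof -
  have x: "R *\<^sub>R e \<in> cball 0 R" using e R by simp
  have c1: "continuous_on {t. 0 \<le> t \<and> ereal t < T} (\<lambda>t. u (R *\<^sub>R e) t)" by (rule cont_time[OF cu x])
  have c2: "continuous_on {t. 0 \<le> t \<and> ereal t < T} (\<lambda>t. gu (R *\<^sub>R e) t)" by (rule cont_time[OF cgu x])
  have c3: "continuous_on {t. 0 \<le> t \<and> ereal t < T} (\<lambda>t. gv (R *\<^sub>R e) t)" by (rule cont_time[OF cgv x])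
  have p1: "\<forall>t\<in>{t. 0 \<le> t \<and> ereal t < T}. sqrt ((u (R *\<^sub>R e) t)\<^sup>2 + (gu (R *\<^sub>R e) t \<bullet> e)\<^sup>2) \<noteq> 0"
  proof
    fix t assume "t \<in> {t. 0 \<le> t \<and> ereal t < T}"
    hence "u (R *\<^sub>R e) t > 0" using upos[OF x] by auto
    hence "(u (R *\<^sub>R e) t)\<^sup>2 + (gu (R *\<^sub>R e) t \<bullet> e)\<^sup>2 > 0" by (simp add: add_pos_nonneg)
    thus "sqrt ((u (R *\<^sub>R e) t)\<^sup>2 + (gu (R *\<^sub>R e) t \<bullet> e)\<^sup>2) \<noteq> 0" using real_sqrt_gt_zero by fastforce
  qed
  have p2: "\<forall>t\<in>{t. 0 \<le> t \<and> ereal t < T}. sqrt (1 + (gv (R *\<^sub>R e) t \<bullet> e)\<^sup>2) \<noteq> 0"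
  proof
    fix t have "1 + (gv (R *\<^sub>R e) t \<bullet> e)\<^sup>2 > 0" by (simp add: add_pos_nonneg)
    thus "sqrt (1 + (gv (R *\<^sub>R e) t \<bullet> e)\<^sup>2) \<noteq> 0" using real_sqrt_gt_zero by fastforce
  qed
  show ?thesis unfolding Ph_def Pexp_def Ur_def Br_def Ar_def
    using c1 c2 c3 p1 p2 by (intro continuous_intros) auto
qed

lemma Ar_R_init: assumes e: "norm e = 1" shows "Ar e 0 R = 0"
proof -
  have T0: "ereal 0 < T" using T by (simp add: zero_ereal_def)
  have "Ph e 0 R = 0" using cont_zero[OF T cPhR[OF e]] bcPh[OF e] by blast
  hence "Pexp chi (Ur e 0 R) 0 (Ar e 0 R) = 0" by (simp add: Ph_def Br_R_init[OF e])
  moreover have "Ur e 0 R > 0" using upos'[OF e _ T0] R by simp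
  ultimately show ?thesis using Pexp_B0A chi by blast
qed

end

context radsol begin



lemma Ar_at: "norm e = 1 \<Longrightarrow> 0 \<le> t \<Longrightarrow> ereal t < T \<Longrightarrow> 0 < s \<Longrightarrow> s < R \<Longrightarrow>
   (Ar e t has_real_derivative A1 e t s) (at s)"
  using dAr[of e t s] interior_X[of s] by simp

lemma Ph_at: "norm e = 1 \<Longrightarrow> 0 \<le> t \<Longrightarrow> ereal t < T \<Longrightarrow> 0 < s \<Longrightarrow> s < R \<Longrightarrow>
   (Ph e t has_real_derivative Ed e t s) (at s)"
  using dPh[of e t s] interior_X[of s] by simp

lemma ftc_v:
  assumes e: "norm e = 1" and t: "0 < t" "ereal t < T"
  shows "((\<lambda>s. s ^ (CARD('n) - 1) * (mu - Ur e t s)) has_integral (R ^ (CARD('n) - 1) * Ar e t R)) {0..R}"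
proof -
  have t0: "0 \<le> t" using t by simp
  have "((\<lambda>s. s ^ (CARD('n) - 1) * (mu - Ur e t s)) has_integral
      ((\<lambda>s. s ^ (CARD('n) - 1) * Ar e t s) R - (\<lambda>s. s ^ (CARD('n) - 1) * Ar e t s) 0)) {0..R}"
  proof (rule fundamental_theorem_of_calculus_interior)
    show "0 \<le> R" using R by simp
    show "continuous_on {0..R} (\<lambda>s. s ^ (CARD('n) - 1) * Ar e t s)"
      using continuous_on_subset[OF cAr[OF e t0 t(2)], of "{0..R}"] by (intro continuous_intros) auto
    fix x assume x: "x \<in> {0<..<R}"
    have d: "((\<lambda>s. s ^ (CARD('n) - 1) * Ar e t s) has_real_derivative
        x ^ (CARD('n) - 1) * A1 e t x + real (CARD('n) - 1) * x ^ (CARD('n) - 1 - Suc 0) * Ar e t x) (at x)"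
      by (rule DERIV_mult'[OF DERIV_pow Ar_at[OF e t0 t(2)]]) (use x in auto)
    have "x ^ (CARD('n) - 1) * A1 e t x + real (CARD('n) - 1) * x ^ (CARD('n) - 1 - Suc 0) * Ar e t x = x ^ (CARD('n) - 1) * (mu - Ur e t x)"
    proof -
      have v: "A1 e t x = mu - Ur e t x - (real CARD('n) - 1) * Ar e t x / x" using radial_veq[OF e t, of x] x by simp
      have p: "real (CARD('n) - 1) * x ^ (CARD('n) - 1 - Suc 0) = (real CARD('n) - 1) * x ^ (CARD('n) - 1) / x"
        using pw_deriv[of x "CARD('n)"] x card_ge1 by simp
      show ?thesis unfolding v p using x by (simp add: field_simps)
    qed
    thus "((\<lambda>s. s ^ (CARD('n) - 1) * Ar e t s) has_vector_derivative x ^ (CARD('n) - 1) * (mu - Ur e t x)) (at x)"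
      using d by (simp add: has_real_derivative_iff_has_vector_derivative)
  qed
  thus ?thesis by (simp add: Ar0[OF t0 t(2)])
qed

lemma ftc_u:
  assumes e: "norm e = 1" and t: "0 < t" "ereal t < T"
  shows "((\<lambda>s. s ^ (CARD('n) - 1) * ut (s *\<^sub>R e) t) has_integral 0) {0..R}"
proof -
  have t0: "0 \<le> t" using t by simp
  have "((\<lambda>s. s ^ (CARD('n) - 1) * ut (s *\<^sub>R e) t) has_integral
      ((\<lambda>s. s ^ (CARD('n) - 1) * Ph e t s) R - (\<lambda>s. s ^ (CARD('n) - 1) * Ph e t s) 0)) {0..R}"
  proof (rule fundamental_theorem_of_calculus_interior)
    show "0 \<le> R" using R by simp
    show "continuous_on {0..R} (\<lambda>s. s ^ (CARD('n) - 1) * Ph e t s)"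
      using continuous_on_subset[OF cPh[OF e t0 t(2)], of "{0..R}"] by (intro continuous_intros) auto
    fix x assume x: "x \<in> {0<..<R}"
    have d: "((\<lambda>s. s ^ (CARD('n) - 1) * Ph e t s) has_real_derivative
        x ^ (CARD('n) - 1) * Ed e t x + real (CARD('n) - 1) * x ^ (CARD('n) - 1 - Suc 0) * Ph e t x) (at x)"
      by (rule DERIV_mult'[OF DERIV_pow Ph_at[OF e t0 t(2)]]) (use x in auto)
    have "x ^ (CARD('n) - 1) * Ed e t x + real (CARD('n) - 1) * x ^ (CARD('n) - 1 - Suc 0) * Ph e t x = x ^ (CARD('n) - 1) * ut (x *\<^sub>R e) t"
    proof -
      have v: "ut (x *\<^sub>R e) t = Ed e t x + (real CARD('n) - 1) * Ph e t x / x" using radial_pde[OF e t, of x] x by simp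
      have p: "real (CARD('n) - 1) * x ^ (CARD('n) - 1 - Suc 0) = (real CARD('n) - 1) * x ^ (CARD('n) - 1) / x"
        using pw_deriv[of x "CARD('n)"] x card_ge1 by simp
      show ?thesis unfolding v p using x by (simp add: field_simps)
    qed
    thus "((\<lambda>s. s ^ (CARD('n) - 1) * Ph e t s) has_vector_derivative x ^ (CARD('n) - 1) * ut (x *\<^sub>R e) t) (at x)"
      using d by (simp add: has_real_derivative_iff_has_vector_derivative)
  qed
  thus ?thesis by (simp add: Ph0[OF t0 t(2)] bcPh[OF e t])
qed

definition "Mass e t = integral {0..R} (\<lambda>s. s ^ (CARD('n) - 1) * Ur e t s)"

lemma mass_const:
  assumes e: "norm e = 1" and t1: "0 < t1" "ereal t1 < T"
  shows "Mass e t1 = Mass e 0"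
proof -
  let ?U = "{0..t1}"
  have sub: "\<And>t. t \<in> ?U \<Longrightarrow> 0 \<le> t \<and> ereal t < T" using tI_le[OF t1] by auto
  have D: "((\<lambda>x. integral (cbox 0 R) (\<lambda>s. s ^ (CARD('n) - 1) * u (s *\<^sub>R e) x)) has_field_derivative
       integral (cbox 0 R) (\<lambda>s. s ^ (CARD('n) - 1) * ut (s *\<^sub>R e) x0)) (at x0 within ?U)" if x0: "x0 \<in> ?U" for x0
  proof (rule leibniz_rule_field_derivative[where fx = "\<lambda>x s. s ^ (CARD('n) - 1) * ut (s *\<^sub>R e) x"])
    fix x s assume x: "x \<in> ?U" and s: "s \<in> cbox 0 R"
    have sc: "s *\<^sub>R e \<in> cball 0 R" using s e by (simp add: cbox_interval)
    have tx: "0 \<le> x" "ereal x < T" using sub[OF x] by auto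
    have US: "?U \<subseteq> {t. 0 \<le> t \<and> ereal t < T}" using sub by blast
    have "((\<lambda>x. u (s *\<^sub>R e) x) has_real_derivative ut (s *\<^sub>R e) x) (at x within ?U)"
      using DERIV_subset[OF dut[OF sc tx] US] .
    thus "((\<lambda>x. s ^ (CARD('n) - 1) * u (s *\<^sub>R e) x) has_field_derivative s ^ (CARD('n) - 1) * ut (s *\<^sub>R e) x) (at x within ?U)"
      by (rule DERIV_cmult)
  next
    fix x assume x: "x \<in> ?U"
    have tx: "0 \<le> x" "ereal x < T" using sub[OF x] by auto
    have XX: "{0..R} \<subseteq> X" by auto
    have cu1: "continuous_on {0..R} (\<lambda>s. u (s *\<^sub>R e) x)"
      using continuous_on_subset[OF cUr[OF e tx] XX] unfolding Ur_def .
    have "continuous_on {0..R} (\<lambda>s. s ^ (CARD('n) - 1) * u (s *\<^sub>R e) x)"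
      by (intro continuous_intros cu1)
    thus "(\<lambda>s. s ^ (CARD('n) - 1) * u (s *\<^sub>R e) x) integrable_on cbox 0 R"
      by (simp add: cbox_interval integrable_continuous_interval)
  next
    have img: "(\<lambda>p. (snd p *\<^sub>R e, fst p)) ` (?U \<times> cbox 0 R) \<subseteq> {(x,t). x \<in> cball 0 R \<and> 0 \<le> t \<and> ereal t < T}"
    proof
      fix q assume "q \<in> (\<lambda>p. (snd p *\<^sub>R e, fst p)) ` (?U \<times> cbox 0 R)"
      then obtain a b where ab: "a \<in> ?U" "b \<in> cbox 0 R" "q = (b *\<^sub>R e, a)" by auto
      have b: "0 \<le> b" "b \<le> R" using ab(2) by (auto simp: cbox_interval)
      have bc: "b *\<^sub>R e \<in> cball 0 R" using e b by simp
      have at: "0 \<le> a \<and> ereal a < T" using sub[OF ab(1)] .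
      show "q \<in> {(x,t). x \<in> cball 0 R \<and> 0 \<le> t \<and> ereal t < T}" unfolding ab(3) using bc at by simp
    qed
    have cc: "continuous_on (?U \<times> cbox 0 R) (\<lambda>p. (snd p *\<^sub>R e, fst p))"
      by (intro continuous_intros)
    have "continuous_on (?U \<times> cbox 0 R) (\<lambda>p. (\<lambda>(x,t). ut x t) (snd p *\<^sub>R e, fst p))"
      by (rule continuous_on_compose2[OF cut cc img])
    hence c2: "continuous_on (?U \<times> cbox 0 R) (\<lambda>p. ut (snd p *\<^sub>R e) (fst p))" by simp
    have "continuous_on (?U \<times> cbox 0 R) (\<lambda>p. snd p ^ (CARD('n) - 1) * ut (snd p *\<^sub>R e) (fst p))"
      by (intro continuous_intros c2)
    thus "continuous_on (?U \<times> cbox 0 R) (\<lambda>(x, s). s ^ (CARD('n) - 1) * ut (s *\<^sub>R e) x)"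
      by (simp add: case_prod_beta)
  qed (use x0 in auto)
  have M: "Mass e = (\<lambda>x. integral (cbox 0 R) (\<lambda>s. s ^ (CARD('n) - 1) * u (s *\<^sub>R e) x))"
    by (simp add: fun_eq_iff Mass_def Ur_def cbox_interval)
  have cont: "continuous_on {0..t1} (Mass e)" unfolding M by (rule DERIV_continuous_on[OF D])
  have der: "(Mass e has_real_derivative 0) (at x)" if x: "0 < x" "x < t1" for x
  proof -
    have "at x within ?U = at x" using x by (intro at_within_interior) auto
    hence "(Mass e has_real_derivative integral (cbox 0 R) (\<lambda>s. s ^ (CARD('n) - 1) * ut (s *\<^sub>R e) x)) (at x)"
      using D[of x] x unfolding M by simp
    moreover have "integral (cbox 0 R) (\<lambda>s. s ^ (CARD('n) - 1) * ut (s *\<^sub>R e) x) = 0"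
      using ftc_u[OF e, of x] x sub[of x] by (simp add: cbox_interval integral_unique)
    ultimately show ?thesis by simp
  qed
  show ?thesis using DERIV_isconst_end[OF t1(1) cont der] by simp
qed

end

context radsol begin

lemma ArR0:
  assumes e: "norm e = 1" and t: "0 < t" "ereal t < T"
  shows "Ar e t R = 0"
proof -
  define C where "C = integral {0..R} (\<lambda>s. s ^ (CARD('n) - 1) * mu)"
  have W: "R ^ (CARD('n) - 1) * Ar e \<tau> R = C - Mass e 0" if tau: "0 < \<tau>" "ereal \<tau> < T" for \<tau>
  proof -
    have t0: "0 \<le> \<tau>" using tau by simp
    have XX: "{0..R} \<subseteq> X" by auto
    have cU: "continuous_on {0..R} (Ur e \<tau>)" using continuous_on_subset[OF cUr[OF e t0 tau(2)] XX] .
    have i1: "(\<lambda>s. s ^ (CARD('n) - 1) * mu) integrable_on {0..R}"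
      by (intro integrable_continuous_interval continuous_intros)
    have i2: "(\<lambda>s. s ^ (CARD('n) - 1) * Ur e \<tau> s) integrable_on {0..R}"
      by (intro integrable_continuous_interval continuous_intros cU)
    have "R ^ (CARD('n) - 1) * Ar e \<tau> R = integral {0..R} (\<lambda>s. s ^ (CARD('n) - 1) * (mu - Ur e \<tau> s))"
      using ftc_v[OF e tau] by (simp add: integral_unique)
    also have "(\<lambda>s. s ^ (CARD('n) - 1) * (mu - Ur e \<tau> s)) = (\<lambda>s. s ^ (CARD('n) - 1) * mu - s ^ (CARD('n) - 1) * Ur e \<tau> s)"
      by (simp add: fun_eq_iff algebra_simps)
    also have "integral {0..R} \<dots> = C - Mass e \<tau>"
      unfolding C_def Mass_def by (rule integral_diff[OF i1 i2])
    also have "Mass e \<tau> = Mass e 0" using mass_const[OF e tau] .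
    finally show ?thesis .
  qed
  have x: "R *\<^sub>R e \<in> cball 0 R" using e R by simp
  have cW: "continuous_on {t. 0 \<le> t \<and> ereal t < T} (\<lambda>t. R ^ (CARD('n) - 1) * Ar e t R)"
    unfolding Ar_def by (intro continuous_intros cont_time[OF cgv x])
  have "R ^ (CARD('n) - 1) * Ar e 0 R = C - Mass e 0"
    using cont_zero[OF T cW] W by blast
  hence "C - Mass e 0 = 0" using Ar_R_init[OF e] by simp
  hence "R ^ (CARD('n) - 1) * Ar e t R = 0" using W[OF t] by simp
  thus ?thesis using R by simp
qed

lemma Ar_bound0:
  assumes e: "norm e = 1" and t: "0 < t" "ereal t < T" and s: "0 < s" "s \<le> R"
  shows "s ^ (CARD('n) - 1) * Ar e t s - mu / real CARD('n) * s ^ CARD('n) \<le> 0"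
proof -
  have t0: "0 \<le> t" using t by simp
  define g where "g = (\<lambda>x. x ^ (CARD('n) - 1) * Ar e t x - mu / real CARD('n) * x ^ CARD('n))"
  define g' where "g' = (\<lambda>x. x ^ (CARD('n) - 1) * A1 e t x + real (CARD('n) - 1) * x ^ (CARD('n) - 1 - Suc 0) * Ar e t x
      - mu / real CARD('n) * (real CARD('n) * x ^ (CARD('n) - Suc 0)))"
  have dg: "(g has_real_derivative g' x) (at x within {0..s})" if x: "0 \<le> x" "x \<le> s" for x
  proof -
    have xX: "x \<in> X" using x s R by auto
    have sub: "{0..s} \<subseteq> X" using s by auto
    have dA: "(Ar e t has_real_derivative A1 e t x) (at x within {0..s})"
      using DERIV_subset[OF dAr[OF e t0 t(2) xX] sub] .
    show ?thesis unfolding g_def g'_def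
      by (intro DERIV_diff DERIV_mult' DERIV_cmult DERIV_pow dA)
  qed
  have dg': "(g has_derivative (*) (g' x)) (at x within {0..s})" if "0 \<le> x" "x \<le> s" for x
    using dg[OF that] by (simp add: has_field_derivative_def)
  obtain \<xi> where xi: "\<xi> \<in> {0<..<s}" and mv: "g s - g 0 = g' \<xi> * (s - 0)"
    using mvt_simple[OF s(1) dg'] by blast
  have n1: "1 \<le> CARD('n)" by (rule card_ge1)
  have g'n: "g' \<xi> = - (\<xi> ^ (CARD('n) - 1) * Ur e t \<xi>)"
  proof -
    have xr: "0 < \<xi>" "\<xi> < R" using xi s by auto
    have v: "A1 e t \<xi> = mu - Ur e t \<xi> - (real CARD('n) - 1) * Ar e t \<xi> / \<xi>" using radial_veq[OF e t xr] by simp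
    have p: "real (CARD('n) - 1) * \<xi> ^ (CARD('n) - 1 - Suc 0) = (real CARD('n) - 1) * \<xi> ^ (CARD('n) - 1) / \<xi>"
      using pw_deriv[of \<xi> "CARD('n)"] xr n1 by simp
    have q: "mu / real CARD('n) * (real CARD('n) * \<xi> ^ (CARD('n) - Suc 0)) = mu * \<xi> ^ (CARD('n) - 1)"
      using n1 by simp
    show ?thesis unfolding g'_def v q p using xr by (simp add: field_simps)
  qed
  have "g' \<xi> \<le> 0"
  proof -
    have xr: "\<xi> \<in> X" using xi s by auto
    have "Ur e t \<xi> > 0" using upos'[OF e t0 t(2) xr] .
    moreover have "\<xi> ^ (CARD('n) - 1) > 0" using xi by simp
    ultimately show ?thesis unfolding g'n by simp
  qed
  hence "g' \<xi> * (s - 0) \<le> 0" using s by (intro mult_nonpos_nonneg) auto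
  hence "g s \<le> g 0" using mv by linarith
  moreover have "g 0 = 0" using n1 by (simp add: g_def Ar0[OF t0 t(2)])
  ultimately show ?thesis by (simp add: g_def)
qed

lemma mu_nonneg: "mu \<ge> 0"
proof -
  obtain t where t: "0 < ereal t" "ereal t < T" using ereal_dense2[OF T] by auto
  have t': "0 < t" using t by simp
  define e :: "real^'n" where "e = axis undefined 1"
  have e: "norm e = 1" by (simp add: e_def)
  have "R ^ (CARD('n) - 1) * Ar e t R - mu / real CARD('n) * R ^ CARD('n) \<le> 0"
    using Ar_bound0[OF e t' t(2) R] by simp
  hence "- (mu / real CARD('n) * R ^ CARD('n)) \<le> 0" using ArR0[OF e t' t(2)] by simp
  hence h: "mu * (R ^ CARD('n) / real CARD('n)) \<ge> 0" by simp
  have pos: "R ^ CARD('n) / real CARD('n) > 0" using R card_ge1[where 'n='n] by simp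
  show ?thesis
  proof (rule ccontr)
    assume "\<not> 0 \<le> mu" hence "mu < 0" by simp
    hence "mu * (R ^ CARD('n) / real CARD('n)) < 0" using pos by (rule mult_neg_pos)
    thus False using h by linarith
  qed
qed

lemma Ar_bound:
  assumes e: "norm e = 1" and t: "0 < t" "ereal t < T" and s: "0 < s" "s \<le> R"
  shows "Ar e t s \<le> mu * s / real CARD('n)"
proof -
  have n1: "1 \<le> CARD('n)" by (rule card_ge1)
  have "s ^ (CARD('n) - 1) * Ar e t s \<le> mu / real CARD('n) * s ^ CARD('n)"
    using Ar_bound0[OF e t s] by simp
  also have "s ^ CARD('n) = s ^ (CARD('n) - 1) * s"
    using n1 by (metis One_nat_def Suc_diff_le diff_Suc_1 power_Suc2 le_add_diff_inverse2 le_numeral_extra(4) plus_1_eq_Suc)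
  finally have A: "s ^ (CARD('n) - 1) * Ar e t s \<le> s ^ (CARD('n) - 1) * (mu * s / real CARD('n))"
    by (simp add: algebra_simps)
  have pos: "s ^ (CARD('n) - 1) > 0" using s by simp
  show ?thesis using mult_left_le_imp_le[OF A pos] .
qed

end

context radsol begin

definition "kap = chi * mu + 2 * (real CARD('n) - 1) * chi * mu / (3 * sqrt 3 * real CARD('n))"

lemma kap_ge: "kap \<ge> chi * mu"
proof -
  have "2 * (real CARD('n) - 1) * chi * mu / (3 * sqrt 3 * real CARD('n)) \<ge> 0"
    using card_ge1[where 'n='n] chi mu_nonneg by simp
  thus ?thesis unfolding kap_def by simp
qed

lemma mat_axis: "((M::real^'n^'n) *v axis i 1) \<bullet> axis i 1 = M $ i $ i"
  by (simp add: inner_axis matrix_vector_mult_basis column_def)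

lemma spatial0:
  assumes t: "0 < t" "ereal t < T" and mn: "\<And>y. y \<in> cball 0 R \<Longrightarrow> u 0 t \<le> u y t"
  shows "ut 0 t \<ge> - kap * u 0 t"
proof -
  have t0: "0 \<le> t" using t by simp
  have z: "(0::real^'n) \<in> cball 0 R" "(0::real^'n) \<in> ball 0 R" using R by auto
  have ai: "at (0::real^'n) within cball 0 R = at 0" using R by (intro at_within_interior) simp
  have du0: "((\<lambda>y. u y t) has_derivative (\<lambda>h. gu 0 t \<bullet> h)) (at 0)" using du[OF z(1) t0 t(2)] unfolding ai .
  have dgu0: "((\<lambda>y. gu y t) has_derivative (\<lambda>h. Hu 0 t *v h)) (at 0)" using dgu[OF z(1) t0 t(2)] unfolding ai .
  have dgv0: "((\<lambda>y. gv y t) has_derivative (\<lambda>h. Hv 0 t *v h)) (at 0)" using dgv[OF z(1) t0 t(2)] unfolding ai .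
  have g0: "gu 0 t = 0" "gv 0 t = 0" using gu0[OF t0 t(2)] gv0[OF t0 t(2)] by auto
  have U: "u 0 t > 0" using upos[OF z(1) t0 t(2)] .
  define \<alpha> where "\<alpha> = (\<lambda>y. u y t / sqrt ((u y t)\<^sup>2 + gu y t \<bullet> gu y t))"
  define \<beta> where "\<beta> = (\<lambda>y. chi * u y t / sqrt (1 + gv y t \<bullet> gv y t))"
  have p1: "0 < (u 0 t)\<^sup>2 + gu 0 t \<bullet> gu 0 t" using U by (simp add: g0)
  have p2: "0 < 1 + gv 0 t \<bullet> gv 0 t" by (simp add: g0)
  have nz1: "sqrt ((u 0 t)\<^sup>2 + gu 0 t \<bullet> gu 0 t) \<noteq> 0" using p1 by simp
  have nz2: "sqrt (1 + gv 0 t \<bullet> gv 0 t) \<noteq> 0" using p2 by simp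
  note dN = has_derivative_add[OF has_derivative_power[OF du0, of 2] has_derivative_inner[OF dgu0 dgu0]]
  note dA = has_derivative_divide[OF du0 has_derivative_real_sqrt[OF p1 dN] nz1]
  note dM = has_derivative_add[OF has_derivative_const[of 1] has_derivative_inner[OF dgv0 dgv0]]
  note dB = has_derivative_divide[OF bounded_linear.has_derivative[OF bounded_linear_mult_right du0] has_derivative_real_sqrt[OF p2 dM] nz2]
  have "\<exists>D. (\<alpha> has_derivative D) (at 0)"
    unfolding \<alpha>_def using dA by blast
  then obtain Da where Da: "(\<alpha> has_derivative Da) (at 0)" by blast
  have "\<exists>D. (\<beta> has_derivative D) (at 0)"
    unfolding \<beta>_def using dB by blast
  then obtain Db where Db: "(\<beta> has_derivative Db) (at 0)" by blast
  have a0: "\<alpha> 0 = 1" using U by (simp add: \<alpha>_def g0)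
  have b0: "\<beta> 0 = chi * u 0 t" by (simp add: \<beta>_def g0)
  have G: "(\<lambda>y. flux chi (u y t) (gu y t) (gv y t)) = (\<lambda>y. \<alpha> y *\<^sub>R gu y t - \<beta> y *\<^sub>R gv y t)"
    by (simp add: fun_eq_iff flux_def \<alpha>_def \<beta>_def power2_norm_eq_inner)
  have dG: "((\<lambda>y. flux chi (u y t) (gu y t) (gv y t)) has_derivative
      (\<lambda>h. (\<alpha> 0 *\<^sub>R (Hu 0 t *v h) + Da h *\<^sub>R gu 0 t) - (\<beta> 0 *\<^sub>R (Hv 0 t *v h) + Db h *\<^sub>R gv 0 t))) (at 0)"
    unfolding G by (intro has_derivative_diff has_derivative_scaleR Da Db dgu0 dgv0)
  obtain DG where DG: "((\<lambda>y. flux chi (u y t) (gu y t) (gv y t)) has_derivative DG) (at 0)"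
    and ut: "ut 0 t = (\<Sum>i\<in>UNIV. DG (axis i 1) $ i)"
    using divg[OF z(2) t] unfolding has_divergence_def by blast
  have DGe: "DG = (\<lambda>h. (\<alpha> 0 *\<^sub>R (Hu 0 t *v h) + Da h *\<^sub>R gu 0 t) - (\<beta> 0 *\<^sub>R (Hv 0 t *v h) + Db h *\<^sub>R gv 0 t))"
    using has_derivative_unique[OF DG dG] .
  have tr: "ut 0 t = (\<Sum>i\<in>UNIV. Hu 0 t $ i $ i) - chi * u 0 t * (\<Sum>i\<in>UNIV. Hv 0 t $ i $ i)"
  proof -
    have "ut 0 t = (\<Sum>i\<in>UNIV. (Hu 0 t *v axis i 1) $ i - chi * u 0 t * (Hv 0 t *v axis i 1) $ i)"
      unfolding ut DGe by (simp add: a0 b0 g0)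
    also have "\<dots> = (\<Sum>i\<in>UNIV. (Hu 0 t *v axis i 1) $ i) - chi * u 0 t * (\<Sum>i\<in>UNIV. (Hv 0 t *v axis i 1) $ i)"
      by (simp add: sum_subtractf sum_distrib_left)
    finally show ?thesis by (simp add: trace_mat)
  qed
  have trv: "(\<Sum>i\<in>UNIV. Hv 0 t $ i $ i) = mu - u 0 t" using veq[OF z(2) t] by simp
  have tru: "(\<Sum>i\<in>UNIV. Hu 0 t $ i $ i) \<ge> 0"
  proof (rule sum_nonneg)
    fix i :: 'n
    define e :: "real^'n" where "e = axis i 1"
    have e: "norm e = 1" by (simp add: e_def)
    have sub: "{-R..0} \<subseteq> X" by auto
    have "B1 e t 0 \<ge> 0"
    proof (rule sd_left[of "-R" 0 "Ur e t" "Br e t"])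
      show "-R < 0" using R by simp
      fix s assume s: "s \<in> {-R..0}"
      hence sX: "s \<in> X" by auto
      show "(Ur e t has_real_derivative Br e t s) (at s within {-R..0})"
        using DERIV_subset[OF dUr[OF e t0 t(2) sX] sub] .
      show "Ur e t 0 \<le> Ur e t s" using mn[OF inX[OF e sX]] by (simp add: Ur_def)
    next
      show "(Br e t has_real_derivative B1 e t 0) (at 0 within {-R..0})"
        using DERIV_subset[OF dBr[OF e t0 t(2)] sub] R by auto
      show "Br e t 0 = 0" using Br0[OF t0 t(2)] .
    qed
    thus "Hu 0 t $ i $ i \<ge> 0" by (simp add: B1_def e_def mat_axis)
  qed
  have "ut 0 t = (\<Sum>i\<in>UNIV. Hu 0 t $ i $ i) - chi * u 0 t * (mu - u 0 t)" using tr trv by simp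
  also have "\<dots> \<ge> - (chi * mu) * u 0 t"
  proof -
    have "chi * u 0 t * u 0 t \<ge> 0" using chi U by simp
    thus ?thesis using tru by (simp add: algebra_simps)
  qed
  finally have "ut 0 t \<ge> - (chi * mu) * u 0 t" .
  moreover have "- kap * u 0 t \<le> - (chi * mu) * u 0 t" using kap_ge U by simp
  ultimately show ?thesis by linarith
qed

end

context radsol begin

lemma spatial1:
  assumes t: "0 < t" "ereal t < T" and x: "x \<in> cball 0 R" "x \<noteq> 0"
    and mn: "\<And>y. y \<in> cball 0 R \<Longrightarrow> u x t \<le> u y t"
  shows "ut x t \<ge> - kap * u x t"
proof -
  have t0: "0 \<le> t" using t by simp
  define r where "r = norm x"
  define e where "e = (1/r) *\<^sub>R x"
  have r: "0 < r" "r \<le> R" using x by (auto simp: r_def)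
  have e: "norm e = 1" using r by (simp add: e_def r_def)
  have xr: "x = r *\<^sub>R e" using r by (simp add: e_def)
  have rX: "r \<in> X" using r by auto
  have Ux: "Ur e t r = u x t" by (simp add: Ur_def xr)
  have mnU: "Ur e t r \<le> Ur e t s" if "s \<in> X" for s
    using mn[OF inX[OF e that]] Ux by (simp add: Ur_def)
  have U: "Ur e t r > 0" using upos'[OF e t0 t(2) rX] .
  have b0: "Br e t r = 0"
  proof (cases "r < R")
    case True
    have "at r within X = at r" using True r by (intro interior_X) auto
    hence d: "(Ur e t has_real_derivative Br e t r) (at r)" using dUr[OF e t0 t(2) rX] by simp
    show ?thesis
    proof (rule DERIV_local_min[OF d])
      show "0 < R - r" using True by simp
      show "\<forall>y. \<bar>r - y\<bar> < R - r \<longrightarrow> Ur e t r \<le> Ur e t y"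
      proof (intro allI impI)
        fix y assume "\<bar>r - y\<bar> < R - r"
        hence "y \<in> X" using r by auto
        thus "Ur e t r \<le> Ur e t y" by (rule mnU)
      qed
    qed
  next
    case False
    hence rR: "r = R" using r by simp
    have "Ph e t R = 0" using bcPh[OF e t] .
    hence "Pexp chi (Ur e t R) (Br e t R) 0 = 0" using ArR0[OF e t] by (simp add: Ph_def)
    thus ?thesis using Pexp_R0[OF _ chi] U rR by blast
  qed
  have b1: "B1 e t r \<ge> 0"
  proof (rule sd_left[of 0 r "Ur e t" "Br e t"])
    show "0 < r" by fact
    have sub: "{0..r} \<subseteq> X" using r by auto
    fix s assume s: "s \<in> {0..r}"
    hence sX: "s \<in> X" using r by auto
    show "(Ur e t has_real_derivative Br e t s) (at s within {0..r})"
      using DERIV_subset[OF dUr[OF e t0 t(2) sX] sub] .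
    show "Ur e t r \<le> Ur e t s" by (rule mnU[OF sX])
  next
    have sub: "{0..r} \<subseteq> X" using r by auto
    show "(Br e t has_real_derivative B1 e t r) (at r within {0..r})"
      using DERIV_subset[OF dBr[OF e t0 t(2) rX] sub] .
    show "Br e t r = 0" by (rule b0)
  qed
  have sub2: "{R/2..R} \<subseteq> X" using R by auto
  have nz: "\<forall>s\<in>{R/2..R}. s \<noteq> 0" using R by auto
  have pde: "ut x t = Ed e t r + (real CARD('n) - 1) * Ph e t r / r"
  proof (cases "r < R")
    case True thus ?thesis using radial_pde[OF e t r(1) True] xr by simp
  next
    case False
    hence rR: "r = R" using r by simp
    have c1: "continuous_on {R/2..R} (\<lambda>s. ut (s *\<^sub>R e) t)"
      using continuous_on_subset[OF cont_line[OF cut e t0 t(2)] sub2] .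
    have c2: "continuous_on {R/2..R} (\<lambda>s. Ed e t s + (real CARD('n) - 1) * Ph e t s / s)"
      using continuous_on_subset[OF cEd[OF e t0 t(2)] sub2] continuous_on_subset[OF cPh[OF e t0 t(2)] sub2] nz
      by (intro continuous_intros) auto
    have "ut (R *\<^sub>R e) t = Ed e t R + (real CARD('n) - 1) * Ph e t R / R"
      by (rule lim_end[OF _ c1 c2]) (use R radial_pde[OF e t] in auto)
    thus ?thesis using xr rR by simp
  qed
  have ve: "A1 e t r + (real CARD('n) - 1) * Ar e t r / r = mu - Ur e t r"
  proof (cases "r < R")
    case True thus ?thesis using radial_veq[OF e t r(1) True] by simp
  next
    case False
    hence rR: "r = R" using r by simp
    have c1: "continuous_on {R/2..R} (\<lambda>s. A1 e t s + (real CARD('n) - 1) * Ar e t s / s)"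
      using continuous_on_subset[OF cA1[OF e t0 t(2)] sub2] continuous_on_subset[OF cAr[OF e t0 t(2)] sub2] nz
      by (intro continuous_intros) auto
    have c2: "continuous_on {R/2..R} (\<lambda>s. mu - Ur e t s)"
      using continuous_on_subset[OF cUr[OF e t0 t(2)] sub2] by (intro continuous_intros) auto
    have "A1 e t R + (real CARD('n) - 1) * Ar e t R / R = mu - Ur e t R"
      by (rule lim_end[OF _ c1 c2]) (use R radial_veq[OF e t] in auto)
    thus ?thesis using rR by simp
  qed
  have Ab: "Ar e t r \<le> mu * r / real CARD('n)" using Ar_bound[OF e t r] .
  have Ed: "Ed e t r = B1 e t r - chi * Ur e t r * A1 e t r / (sqrt (1 + (Ar e t r)\<^sup>2))^3"
    unfolding Ed_def b0 using Eexp_B0[OF U] .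
  have Ph: "Ph e t r = - (chi * Ur e t r * Ar e t r / sqrt (1 + (Ar e t r)\<^sup>2))"
    unfolding Ph_def b0 using Pexp_B0[OF U] .
  have n: "1 \<le> real CARD('n)" using card_ge1[where 'n='n] by simp
  have "B1 e t r - chi * Ur e t r * A1 e t r / (sqrt (1 + (Ar e t r)\<^sup>2))^3
      + (real CARD('n) - 1) * (- (chi * Ur e t r * Ar e t r / sqrt (1 + (Ar e t r)\<^sup>2))) / r
      \<ge> - (chi * mu + 2 * (real CARD('n) - 1) * chi * mu / (3 * sqrt 3 * real CARD('n))) * Ur e t r"
    by (rule final_ineq[OF U chi mu_nonneg r(1) n Ab b1 ve])
  thus ?thesis unfolding pde Ed Ph kap_def Ux .
qed

lemma spatial:
  assumes t: "0 < t" "ereal t < T" and x: "x \<in> cball 0 R"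
    and mn: "\<And>y. y \<in> cball 0 R \<Longrightarrow> u x t \<le> u y t"
  shows "ut x t \<ge> - kap * u x t"
proof (cases "x = 0")
  case True thus ?thesis using spatial0[OF t] mn by simp
next
  case False thus ?thesis using spatial1[OF t x False mn] by simp
qed

end

lemma deriv_left_nonpos:
  fixes h :: "real \<Rightarrow> real"
  assumes ac: "a < c" and d: "(h has_real_derivative D) (at c within {a..c})"
    and gt: "\<And>t. a \<le> t \<Longrightarrow> t < c \<Longrightarrow> h t > h c"
  shows "D \<le> 0"
proof -
  have "((\<lambda>t. (h t - h c) / (t - c)) \<longlongrightarrow> D) (at c within {a..c})"
    using d by (simp add: has_field_derivative_iff)
  hence lim: "((\<lambda>t. (h t - h c) / (t - c)) \<longlongrightarrow> D) (at_left c)"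
    using at_within_Icc_at_left[OF ac] by simp
  have "eventually (\<lambda>t. (h t - h c) / (t - c) \<le> 0) (at_left c)"
  proof (rule eventually_at_leftI[OF _ ac])
    fix t assume "t \<in> {a<..<c}"
    hence "h t - h c > 0" "t - c < 0" using gt[of t] by auto
    thus "(h t - h c) / (t - c) \<le> 0" by (simp add: divide_pos_neg less_imp_le)
  qed
  thus ?thesis using tendsto_upperbound[OF lim] by simp
qed

lemma cont_ge_Icc:
  fixes f :: "real \<Rightarrow> real"
  assumes ab: "a < b" and c: "continuous_on {a..b} f"
    and ge: "\<And>s. a < s \<Longrightarrow> s < b \<Longrightarrow> k \<le> f s" and s: "s \<in> {a..b}"
  shows "k \<le> f s"
proof -
  consider "s = a" | "s = b" | "a < s" "s < b" using s by fastforce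
  thus ?thesis
  proof cases
    case 1
    have "(f \<longlongrightarrow> f a) (at_right a)" using continuous_on_Icc_at_rightD[OF c ab] .
    moreover have "eventually (\<lambda>s. k \<le> f s) (at_right a)"
      by (rule eventually_at_rightI[OF _ ab]) (use ge in auto)
    ultimately show ?thesis using 1 tendsto_lowerbound by fastforce
  next
    case 2
    have "(f \<longlongrightarrow> f b) (at_left b)" using continuous_on_Icc_at_leftD[OF c ab] .
    moreover have "eventually (\<lambda>s. k \<le> f s) (at_left b)"
      by (rule eventually_at_leftI[OF _ ab]) (use ge in auto)
    ultimately show ?thesis using 2 tendsto_lowerbound by fastforce
  next
    case 3 thus ?thesis using ge by simp
  qed
qed

lemma lim_eps:
  fixes m0 k t w :: real
  assumes m0: "0 < m0" and h: "\<And>\<epsilon>. 0 < \<epsilon> \<Longrightarrow> \<epsilon> < m0 \<Longrightarrow> (m0 - \<epsilon>) * exp (- (k + \<epsilon>) * t) < w"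
  shows "m0 * exp (- k * t) \<le> w"
proof -
  have "((\<lambda>\<epsilon>. (m0 - \<epsilon>) * exp (- (k + \<epsilon>) * t)) \<longlongrightarrow> (m0 - 0) * exp (- (k + 0) * t)) (at_right 0)"
    by (intro tendsto_intros)
  hence lim: "((\<lambda>\<epsilon>. (m0 - \<epsilon>) * exp (- (k + \<epsilon>) * t)) \<longlongrightarrow> m0 * exp (- k * t)) (at_right 0)" by simp
  have "eventually (\<lambda>\<epsilon>. (m0 - \<epsilon>) * exp (- (k + \<epsilon>) * t) \<le> w) (at_right 0)"
    by (rule eventually_at_rightI[OF _ m0]) (use h in \<open>auto intro: less_imp_le\<close>)
  thus ?thesis using tendsto_upperbound[OF lim] by simp
qed

context radsol begin

lemma time_arg_eps:
  assumes eps: "0 < \<epsilon>" "\<epsilon> < m0" and init0: "\<And>x. x \<in> cball 0 R \<Longrightarrow> m0 \<le> u0 x"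
    and t1: "0 \<le> t1" "ereal t1 < T"
  shows "\<forall>t\<in>{0..t1}. \<forall>x\<in>cball 0 R. (m0 - \<epsilon>) * exp (- (kap + \<epsilon>) * t) < u x t"
proof (rule ccontr)
  define g where "g = (\<lambda>t. (m0 - \<epsilon>) * exp (- (kap + \<epsilon>) * t))"
  have gpos: "g t > 0" for t using eps by (simp add: g_def)
  have sub: "\<And>t. t \<in> {0..t1} \<Longrightarrow> 0 \<le> t \<and> ereal t < T"
    using t1 by (auto intro: le_less_trans[of _ "ereal t1"])
  assume neg: "\<not> ?thesis"
  define K where "K = (cball 0 R \<times> {0..t1}) \<inter> (\<lambda>p. u (fst p) (snd p) - g (snd p)) -` {..0}"
  have cS: "continuous_on (cball 0 R \<times> {0..t1}) (\<lambda>p. u (fst p) (snd p) - g (snd p))"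
  proof -
    have sub2: "cball 0 R \<times> {0..t1} \<subseteq> {(x,t). x \<in> cball 0 R \<and> 0 \<le> t \<and> ereal t < T}"
      using sub by auto
    have "continuous_on (cball 0 R \<times> {0..t1}) (\<lambda>p. (\<lambda>(x,t). u x t) p)"
      using continuous_on_subset[OF cu sub2] .
    hence "continuous_on (cball 0 R \<times> {0..t1}) (\<lambda>p. u (fst p) (snd p))" by (simp add: case_prod_beta)
    thus ?thesis unfolding g_def by (intro continuous_intros)
  qed
  have clK: "closed K" unfolding K_def
    by (rule continuous_closed_preimage[OF cS]) (auto intro: closed_Times)
  have cK: "compact K"
  proof -
    have "compact ((cball 0 R \<times> {0..t1}) \<inter> K)"
      by (rule compact_Int_closed[OF compact_Times[OF compact_cball compact_Icc] clK])
    moreover have "(cball 0 R \<times> {0..t1}) \<inter> K = K" unfolding K_def by auto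
    ultimately show ?thesis by simp
  qed
  define A where "A = snd ` K"
  have cA: "compact A" unfolding A_def by (rule compact_continuous_image[OF continuous_on_snd[OF continuous_on_id] cK])
  have Adef: "t \<in> A \<longleftrightarrow> t \<in> {0..t1} \<and> (\<exists>x\<in>cball 0 R. u x t \<le> g t)" for t
    unfolding A_def K_def by force
  have "A \<noteq> {}" using neg Adef by (force simp: g_def)
  then obtain ts where ts: "ts \<in> A" and tsmin: "\<And>t. t \<in> A \<Longrightarrow> ts \<le> t"
    using compact_attains_inf[OF cA] by blast
  obtain xs where xs: "xs \<in> cball 0 R" "u xs ts \<le> g ts" and tsI: "ts \<in> {0..t1}" using ts Adef by blast
  have tsT: "0 \<le> ts" "ereal ts < T" using sub[OF tsI] by auto
  have ts0: "ts \<noteq> 0"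
  proof
    assume "ts = 0"
    hence "u xs 0 \<le> m0 - \<epsilon>" using xs by (simp add: g_def)
    moreover have "u xs 0 \<ge> m0" using init0[OF xs(1)] init[OF xs(1)] by simp
    ultimately show False using eps by simp
  qed
  hence tsp: "ts > 0" using tsT by simp
  have before: "g t < u x t" if "0 \<le> t" "t < ts" "x \<in> cball 0 R" for t x
  proof (rule ccontr)
    assume "\<not> g t < u x t"
    hence "u x t \<le> g t" by simp
    hence "\<exists>x\<in>cball 0 R. u x t \<le> g t" using that(3) by blast
    hence "t \<in> A" using Adef that tsI by auto
    thus False using tsmin that by fastforce
  qed
  have atts: "g ts \<le> u x ts" if x: "x \<in> cball 0 R" for x
  proof -
    have cx: "continuous_on {t. 0 \<le> t \<and> ereal t < T} (\<lambda>t. u x t - g t)"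
      unfolding g_def by (intro continuous_intros cont_time[OF cu x])
    have sub3: "{0..ts} \<subseteq> {t. 0 \<le> t \<and> ereal t < T}" using tsT by (auto intro: le_less_trans[of _ "ereal ts"])
    have "0 \<le> u x ts - g ts"
      by (rule cont_ge_Icc[OF tsp continuous_on_subset[OF cx sub3]]) (use before x tsp in \<open>auto simp: less_imp_le\<close>)
    thus ?thesis by simp
  qed
  have eq: "u xs ts = g ts" using xs atts[OF xs(1)] by simp
  have mnx: "\<And>y. y \<in> cball 0 R \<Longrightarrow> u xs ts \<le> u y ts" using eq atts by simp
  have sp: "ut xs ts \<ge> - kap * u xs ts" using spatial[OF tsp tsT(2) xs(1) mnx] .
  have dg: "(g has_real_derivative g ts * (- (kap + \<epsilon>))) (at ts within {0..ts})"
    unfolding g_def by (auto intro!: derivative_eq_intros simp: algebra_simps)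
  have du: "((\<lambda>t. u xs t) has_real_derivative ut xs ts) (at ts within {0..ts})"
  proof -
    have sub3: "{0..ts} \<subseteq> {t. 0 \<le> t \<and> ereal t < T}" using tsT by (auto intro: le_less_trans[of _ "ereal ts"])
    show ?thesis using DERIV_subset[OF dut[OF xs(1) tsT] sub3] .
  qed
  have "ut xs ts - g ts * (- (kap + \<epsilon>)) \<le> 0"
  proof (rule deriv_left_nonpos[OF tsp DERIV_diff[OF du dg]])
    fix t assume "0 \<le> t" "t < ts"
    thus "u xs ts - g ts < u xs t - g t" using before[of t xs] xs eq by simp
  qed
  hence "- kap * g ts + (kap + \<epsilon>) * g ts \<le> 0" using sp eq by (simp add: algebra_simps)
  hence "\<epsilon> * g ts \<le> 0" by (simp add: algebra_simps)
  thus False using eps gpos[of ts] by (simp add: mult_le_0_iff)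
qed

lemma time_arg:
  assumes m0: "0 < m0" and init0: "\<And>x. x \<in> cball 0 R \<Longrightarrow> m0 \<le> u0 x"
    and x: "x \<in> cball 0 R" and t: "0 \<le> t" "ereal t < T"
  shows "m0 * exp (- kap * t) \<le> u x t"
proof (rule lim_eps[OF m0])
  fix \<epsilon> :: real assume "0 < \<epsilon>" "\<epsilon> < m0"
  thus "(m0 - \<epsilon>) * exp (- (kap + \<epsilon>) * t) < u x t"
    using time_arg_eps[OF _ _ init0 t, of \<epsilon>] x t by auto
qed

end

lemma classical_sol_radsol:
  assumes cs: "classical_sol R chi T u0 u v" and R: "R > 0" and chi: "chi > 0" and T: "0 < T"
    and neu: "neumann_zero R u0"
  shows "\<exists>gu Hu ut gv Hv. radsol R chi (mean_ball R u0) T u0 u v ut gu gv Hu Hv"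
  using cs R chi T neu unfolding classical_sol_def Let_def
  apply (elim exE conjE)
  subgoal for gu Hu ut gv Hv
    apply (rule exI[of _ gu], rule exI[of _ Hu], rule exI[of _ ut], rule exI[of _ gv], rule exI[of _ Hv])
    unfolding radsol_def by auto
  done

theorem lemma3p2:
  fixes R chi :: real and Tmax :: ereal
    and u0 :: "real^'n \<Rightarrow> real" and u v :: "real^'n \<Rightarrow> real \<Rightarrow> real"
  assumes "R > 0" and "chi > 0"
    and "C3_cball R u0" and "radial u0" and "\<forall>x\<in>cball 0 R. u0 x > 0"
    and "neumann_zero R u0"
    and "maximal_sol R chi Tmax u0 u v"
  shows "\<forall>x t. 0 < norm x \<and> norm x < R \<and> 0 < t \<and> ereal t < Tmax \<longrightarrow>
           u x t \<ge> (INF y\<in>{y. 0 < norm y \<and> norm y < R}. u0 y) *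
                    exp (- (chi * mean_ball R u0
                            + 2 * (real CARD('n) - 1) * chi * mean_ball R u0
                              / (3 * sqrt 3 * real CARD('n))) * t)"
proof -
  have R: "R > 0" and chi: "chi > 0" using assms by auto
  have mT: "0 < Tmax" and cs: "classical_sol R chi Tmax u0 u v"
    using assms(7) unfolding maximal_sol_def by auto
  obtain gu Hu ut gv Hv where Ls: "radsol R chi (mean_ball R u0) Tmax u0 u v ut gu gv Hu Hv"
    using classical_sol_radsol[OF cs R chi mT assms(6)] by blast
  interpret L: radsol R chi "mean_ball R u0" Tmax u0 u v ut gu gv Hu Hv by (rule Ls)
  define P where "P = {y::real^'n. 0 < norm y \<and> norm y < R}"
  define m0 where "m0 = (INF y\<in>P. u0 y)"
  have T0: "0 \<le> (0::real)" "ereal 0 < Tmax" using mT by (auto simp: zero_ereal_def)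
  have bdd: "bdd_below (u0 ` P)"
    using assms(5) unfolding P_def by (intro bdd_belowI[of _ 0]) (auto intro: less_imp_le)
  have initm: "m0 \<le> u0 x" if x: "x \<in> cball 0 R" for x
  proof -
    define e :: "real^'n" where "e = (if x = 0 then axis undefined 1 else (1 / norm x) *\<^sub>R x)"
    have e: "norm e = 1" using x by (simp add: e_def)
    have xe: "x = norm x *\<^sub>R e" by (simp add: e_def)
    have XX: "{0..R} \<subseteq> {-R..R}" by auto
    have c: "continuous_on {0..R} (\<lambda>s. u (s *\<^sub>R e) 0)"
      using continuous_on_subset[OF L.cont_line[OF L.cu e T0] XX] .
    have "m0 \<le> u (norm x *\<^sub>R e) 0"
    proof (rule cont_ge_Icc[OF R c])
      fix s assume s: "0 < s" "s < R"
      have e0: "e \<noteq> 0" using e by (metis norm_zero zero_neq_one)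
      have sP: "s *\<^sub>R e \<in> P" using s e e0 by (simp add: P_def)
      have "m0 \<le> u0 (s *\<^sub>R e)" unfolding m0_def by (rule cINF_lower[OF bdd sP])
      also have "u0 (s *\<^sub>R e) = u (s *\<^sub>R e) 0" using L.init[of "s *\<^sub>R e"] sP by (simp add: P_def)
      finally show "m0 \<le> u (s *\<^sub>R e) 0" .
    next
      show "norm x \<in> {0..R}" using x by simp
    qed
    thus ?thesis using xe L.init[OF x] by simp
  qed
  show ?thesis
  proof (intro allI impI)
    fix x :: "real^'n" and t :: real
    assume h: "0 < norm x \<and> norm x < R \<and> 0 < t \<and> ereal t < Tmax"
    have x: "x \<in> cball 0 R" using h by simp
    have t: "0 \<le> t" "ereal t < Tmax" using h by auto
    have up: "u x t > 0" using L.upos[OF x t] .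
    show "u x t \<ge> (INF y\<in>{y. 0 < norm y \<and> norm y < R}. u0 y) *
                    exp (- (chi * mean_ball R u0
                            + 2 * (real CARD('n) - 1) * chi * mean_ball R u0
                              / (3 * sqrt 3 * real CARD('n))) * t)"
    proof (cases "m0 > 0")
      case True
      have "m0 * exp (- L.kap * t) \<le> u x t" using L.time_arg[OF True initm x t] .
      thus ?thesis unfolding m0_def P_def L.kap_def .
    next
      case False
      hence "m0 * exp (- L.kap * t) \<le> 0" by (simp add: mult_nonpos_nonneg)
      thus ?thesis using up unfolding m0_def P_def L.kap_def by linarith
    qed
  qed
qed

end
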